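(* If $X$ is a finite quasi-metric space, then the Euler characteristic of its realized magnitude nerve is equal to the alternating sum of the ranks of its magnitude homology groups: \[ \chi(B(\Sigma X,\mathbb{1}))= \sum_n (-1)^n \,\mathrm{rk}\, \mathit{HM}_n(X), \] the infinite sum converging in the topology of $\mathbb{Q}(\!(q^\mathbb{R})\!)$.
   Context: A quasi-metric space is a skeletal $[0,\infty)$-enriched category (distances may be asymmetric, $d(x,y)>0$ for $x\ne y$). Let $\mathbf{A}=\prod_\mathbb{R}\mathrm{Ab}$ be $\mathbb{R}$-graded abelian groups with convolution tensor product $(A\otimes B)_\ell=\bigoplus_{j+k=\ell}A_j\otimes B_k$, and $\mathbf{W}=\mathrm{Ch}_\mathbf{A}$. Define $\Sigma:[0,\infty)\to\mathbf{W}$ by $\Sigma(\ell)=\mathbb{Z}$ in chain degree 0 and grading $\ell$, and $0$ elsewhere. $\mathbb{Q}(\!(q^\mathbb{R})\!)$ is the field of Hahn series $\sum_\ell a_\ell q^\ell$ ($a_\ell\in\mathbb{Q}$, well-ordered support), with the valuation topology (a series of Hahn series converges iff the smallest exponents of its terms tend to $\infty$). The Euler characteristic $\chi$ of a (Hahn finite) object of $\mathbf{W}$ is the Hahn series whose $q^\ell$-coefficient is the usual Euler characteristic of the grading-$\ell$ part; the rank of an $\mathbb{R}$-graded abelian group is likewise the Hahn series of the ranks of its graded pieces. The realized magnitude nerve $B(\Sigma X,\mathbb{1})$ is (after normalization) the chain complex whose $n$-chains in grading $\ell$ are freely generated by tuples $(x_0,\dots,x_n)$ with $x_i\neq x_{i+1}$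 and $d(x_0,x_1)+\cdots+d(x_{n-1},x_n)=\ell$, with boundary the alternating sum of the face maps $d^i$, where $d^i$ deletes $x_i$ if this does not change the total distance and is $0$ otherwise. Magnitude homology $\mathit{HM}_n(X)=\{\mathit{HM}^\ell_n(X)\}_{\ell\in\mathbb{R}}$ is the homology of this complex. *)

theory Defs
  imports Complex_Main "HOL-Algebra.Free_Abelian_Groups"
begin

definition quasi_metric :: "'a set \<Rightarrow> ('a \<Rightarrow> 'a \<Rightarrow> real) \<Rightarrow> bool" where
  "quasi_metric X d \<longleftrightarrow>
     (\<forall>x\<in>X. \<forall>y\<in>X. 0 \<le> d x y) \<and>
     (\<forall>x\<in>X. d x x = 0) \<and>
     (\<forall>x\<in>X. \<forall>y\<in>X. \<forall>z\<in>X. d x z \<le> d x y + d y z) \<and>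
     (\<forall>x\<in>X. \<forall>y\<in>X. x \<noteq> y \<longrightarrow> 0 < d x y)"

text \<open>Total distance of a tuple (x_0,...,x_n), represented as a list of length n+1.\<close>
definition tuple_length :: "('a \<Rightarrow> 'a \<Rightarrow> real) \<Rightarrow> 'a list \<Rightarrow> real" where
  "tuple_length d xs = (\<Sum>i<length xs - 1. d (xs ! i) (xs ! Suc i))"

definition nerve_gens :: "'a set \<Rightarrow> ('a \<Rightarrow> 'a \<Rightarrow> real) \<Rightarrow> nat \<Rightarrow> real \<Rightarrow> 'a list set" where
  "nerve_gens X d n l = {xs. length xs = Suc n \<and> set xs \<subseteq> X \<and>
       (\<forall>i<n. xs ! i \<noteq> xs ! Suc i) \<and> tuple_length d xs = l}"

definition nerve_chains :: "'a set \<Rightarrow> ('a \<Rightarrow> 'a \<Rightarrow> real) \<Rightarrow> nat \<Rightarrow> real \<Rightarrow> ('a list \<Rightarrow>\<^sub>0 int) monoid" where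
  "nerve_chains X d n l = free_Abelian_group (nerve_gens X d n l)"

definition delete_at :: "nat \<Rightarrow> 'a list \<Rightarrow> 'a list" where
  "delete_at i xs = take i xs @ drop (Suc i) xs"

definition nerve_face :: "('a \<Rightarrow> 'a \<Rightarrow> real) \<Rightarrow> nat \<Rightarrow> 'a list \<Rightarrow> 'a list \<Rightarrow>\<^sub>0 int" where
  "nerve_face d i xs =
     (if tuple_length d (delete_at i xs) = tuple_length d xs then frag_of (delete_at i xs) else 0)"

definition nerve_boundary :: "('a \<Rightarrow> 'a \<Rightarrow> real) \<Rightarrow> nat \<Rightarrow> ('a list \<Rightarrow>\<^sub>0 int) \<Rightarrow> 'a list \<Rightarrow>\<^sub>0 int" where
  "nerve_boundary d n c =
     (if n = 0 then 0
      else frag_extend (\<lambda>xs. \<Sum>i\<le>n. frag_cmul ((-1) ^ i) (nerve_face d i xs)) c)"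

definition magnitude_homology ::
  "'a set \<Rightarrow> ('a \<Rightarrow> 'a \<Rightarrow> real) \<Rightarrow> nat \<Rightarrow> real \<Rightarrow> ('a list \<Rightarrow>\<^sub>0 int) set monoid" where
  "magnitude_homology X d n l =
     subgroup_generated (nerve_chains X d n l)
        {c \<in> carrier (nerve_chains X d n l). nerve_boundary d n c = 0}
     Mod (nerve_boundary d (Suc n) ` carrier (nerve_chains X d (Suc n) l))"

definition lin_indep_Z :: "('g, 'm) monoid_scheme \<Rightarrow> 'g set \<Rightarrow> bool" where
  "lin_indep_Z G S \<longleftrightarrow>
     (\<forall>c :: 'g \<Rightarrow> int. finprod G (\<lambda>s. s [^]\<^bsub>G\<^esub> c s) S = \<one>\<^bsub>G\<^esub> \<longrightarrow> (\<forall>s\<in>S. c s = 0))"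

definition ab_rank :: "('g, 'm) monoid_scheme \<Rightarrow> nat" where
  "ab_rank G = Sup {card S | S. finite S \<and> S \<subseteq> carrier G \<and> lin_indep_Z G S}"

text \<open>A Hahn series sum_l a_l q^l is represented by its coefficient function;
  it must have well-ordered support.\<close>
definition is_hahn :: "(real \<Rightarrow> rat) \<Rightarrow> bool" where
  "is_hahn f \<longleftrightarrow> (\<forall>S. S \<subseteq> {l. f l \<noteq> 0} \<longrightarrow> S \<noteq> {} \<longrightarrow> (\<exists>m\<in>S. \<forall>s\<in>S. m \<le> s))"

text \<open>The series sum_n a_n converges to s in the valuation topology: for every bound M,
  eventually the partial sums agree with s in all exponents below M.\<close>
definition hahn_sums :: "(nat \<Rightarrow> real \<Rightarrow> rat) \<Rightarrow> (real \<Rightarrow> rat) \<Rightarrow> bool" where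
  "hahn_sums a s \<longleftrightarrow>
     (\<forall>M::real. \<exists>N0. \<forall>N\<ge>N0. \<forall>l<M. (\<Sum>n<N. a n l) = s l)"

text \<open>Euler characteristic of the realized magnitude nerve: the q^l coefficient is the
  Euler characteristic of the grading-l part (a finite sum, as the complex is Hahn finite).\<close>
definition nerve_euler_char :: "'a set \<Rightarrow> ('a \<Rightarrow> 'a \<Rightarrow> real) \<Rightarrow> real \<Rightarrow> rat" where
  "nerve_euler_char X d l =
     (\<Sum>n\<in>{n. ab_rank (nerve_chains X d n l) \<noteq> 0}.
        (-1) ^ n * of_nat (ab_rank (nerve_chains X d n l)))"

definition rank_HM :: "'a set \<Rightarrow> ('a \<Rightarrow> 'a \<Rightarrow> real) \<Rightarrow> nat \<Rightarrow> real \<Rightarrow> rat" where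
  "rank_HM X d n l = of_nat (ab_rank (magnitude_homology X d n l))"

end

theory Submission
  imports Defs "HOL-Library.Function_Algebras"
begin

definition qsc :: "rat \<Rightarrow> ('b \<Rightarrow> rat) \<Rightarrow> ('b \<Rightarrow> rat)" where
  "qsc r f = (\<lambda>x. r * f x)"

interpretation Q: vector_space "qsc :: rat \<Rightarrow> ('b \<Rightarrow> rat) \<Rightarrow> _"
  by unfold_locales (auto simp: qsc_def fun_eq_iff algebra_simps)

definition qind :: "('b \<Rightarrow> rat) set \<Rightarrow> ('b \<Rightarrow> rat) set \<Rightarrow> bool" where
  "qind W R \<longleftrightarrow> (\<forall>q. (\<Sum>r\<in>R. qsc (q r) r) \<in> Q.span W \<longrightarrow> (\<forall>r\<in>R. q r = 0))"

lemma qind_disj: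
  assumes "finite R" "qind W R" "r \<in> R"
  shows "r \<notin> Q.span W"
proof
  assume r: "r \<in> Q.span W"
  have "(\<Sum>x\<in>R. qsc (if x = r then 1 else 0) x) = (\<Sum>x\<in>R. if x = r then r else 0)"
    by (rule sum.cong) auto
  also have "\<dots> = r" using assms by simp
  finally have calc: "(\<Sum>x\<in>R. qsc (if x = r then 1 else 0) x) = r" .
  have "\<forall>x\<in>R. (if x = r then 1 else (0::rat)) = 0"
    using spec[OF assms(2)[unfolded qind_def], of "\<lambda>x. if x = r then 1 else 0"] calc r by simp
  then show False using assms(3) by auto
qed

lemma LA_basis:
  assumes "finite E" "W \<subseteq> Q.span E"
  obtains Bw where "Bw \<subseteq> W" "Q.independent Bw" "W \<subseteq> Q.span Bw" "card Bw = Q.dim W" "finite Bw"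
proof -
  obtain Bw where *: "Bw \<subseteq> W" "Q.independent Bw" "W \<subseteq> Q.span Bw" "card Bw = Q.dim W"
    by (rule Q.basis_exists)
  moreover have "finite Bw"
    using Q.independent_span_bound[OF assms(1) *(2)] *(1) assms(2) by blast
  ultimately show ?thesis using that by blast
qed

lemma LA1:
  assumes E: "finite E" "V \<subseteq> Q.span E" and WV: "W \<subseteq> V" and R: "finite R" "R \<subseteq> V" "qind W R"
  shows "card R + Q.dim W \<le> Q.dim V"
proof -
  obtain Bw where Bw: "Bw \<subseteq> W" "Q.independent Bw" "W \<subseteq> Q.span Bw" "card Bw = Q.dim W" "finite Bw"
    using LA_basis[OF E(1)] WV E(2) by (metis order_trans)
  obtain A where A: "A \<subseteq> V" "Q.independent A" "V \<subseteq> Q.span A" "card A = Q.dim V" "finite A"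
    using LA_basis[OF E] by blast
  have disj: "R \<inter> Bw = {}"
    using qind_disj[OF R(1) R(3)] Bw(1) Q.span_base by blast
  have spBw: "Q.span Bw \<subseteq> Q.span W" using Bw(1) Q.span_mono by blast
  have ind: "Q.independent (R \<union> Bw)"
  proof (rule Q.independent_if_scalars_zero)
    show "finite (R \<union> Bw)" using R Bw by simp
    fix f x assume sum0: "(\<Sum>x\<in>R \<union> Bw. qsc (f x) x) = 0" and x: "x \<in> R \<union> Bw"
    have "(\<Sum>x\<in>R \<union> Bw. qsc (f x) x) = (\<Sum>x\<in>R. qsc (f x) x) + (\<Sum>x\<in>Bw. qsc (f x) x)"
      by (rule sum.union_disjoint[OF R(1) Bw(5) disj])
    hence "(\<Sum>x\<in>R. qsc (f x) x) + (\<Sum>x\<in>Bw. qsc (f x) x) = 0"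
      using sum0 by simp
    hence eq: "(\<Sum>x\<in>R. qsc (f x) x) = - (\<Sum>x\<in>Bw. qsc (f x) x)"
      by (simp add: eq_neg_iff_add_eq_0)
    have "(\<Sum>x\<in>Bw. qsc (f x) x) \<in> Q.span Bw"
      by (intro Q.span_sum Q.span_scale Q.span_base)
    hence "- (\<Sum>x\<in>Bw. qsc (f x) x) \<in> Q.span W" using spBw Q.span_neg by blast
    hence "(\<Sum>x\<in>R. qsc (f x) x) \<in> Q.span W" using eq by simp
    hence fR: "\<forall>r\<in>R. f r = 0" using spec[OF R(3)[unfolded qind_def], of f] by simp
    hence "(\<Sum>x\<in>R. qsc (f x) x) = 0" by (intro sum.neutral) (simp add: Q.scale_zero_left)
    hence "(\<Sum>x\<in>Bw. qsc (f x) x) = 0" using eq by simp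
    hence "\<forall>v\<in>Bw. f v = 0"
      using Bw(2) unfolding Q.independent_explicit_finite_subsets using Bw(5) by blast
    then show "f x = 0" using fR x by blast
  qed
  have "card (R \<union> Bw) \<le> card A"
    using Q.independent_span_bound[OF A(5) ind] R(2) Bw(1) WV A(3) by blast
  then show ?thesis using card_Un_disjoint[OF R(1) Bw(5) disj] A(4) Bw(4) by simp
qed

lemma LA2:
  assumes E: "finite E" "V \<subseteq> Q.span E" and WV: "W \<subseteq> V"
  shows "\<exists>R. finite R \<and> R \<subseteq> V \<and> qind W R \<and> card R + Q.dim W = Q.dim V"
proof -
  obtain Bw where Bw: "Bw \<subseteq> W" "Q.independent Bw" "W \<subseteq> Q.span Bw" "card Bw = Q.dim W" "finite Bw"
    using LA_basis[OF E(1)] WV E(2) by (metis order_trans)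
  obtain Bv where Bv: "Bw \<subseteq> Bv" "Bv \<subseteq> V" "Q.independent Bv" "V \<subseteq> Q.span Bv"
    using Q.maximal_independent_subset_extend[of Bw V] Bw(1,2) WV by blast
  have cBv: "card Bv = Q.dim V" using Q.basis_card_eq_dim Bv by blast
  have fBv: "finite Bv" using Q.independent_span_bound[OF E(1) Bv(3)] Bv(2) E(2) by blast
  define R where "R = Bv - Bw"
  have fR: "finite R" using fBv R_def by simp
  have "qind W R"
    unfolding qind_def
  proof (intro allI impI)
    fix q assume "(\<Sum>r\<in>R. qsc (q r) r) \<in> Q.span W"
    moreover have "Q.span W \<subseteq> Q.span Bw"
      using Bw(3) Q.span_minimal Q.subspace_span by blast
    ultimately have "(\<Sum>r\<in>R. qsc (q r) r) \<in> range (\<lambda>u. \<Sum>v\<in>Bw. qsc (u v) v)"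
      using Q.span_finite[OF Bw(5)] by blast
    then obtain u where u: "(\<Sum>r\<in>R. qsc (q r) r) = (\<Sum>v\<in>Bw. qsc (u v) v)" by blast
    define f where "f x = (if x \<in> R then q x else - u x)" for x
    have disj: "R \<inter> Bw = {}" and un: "Bv = R \<union> Bw" using R_def Bv(1) by auto
    have "(\<Sum>x\<in>Bv. qsc (f x) x) = (\<Sum>x\<in>R. qsc (f x) x) + (\<Sum>x\<in>Bw. qsc (f x) x)"
      unfolding un by (rule sum.union_disjoint[OF fR Bw(5) disj])
    also have "(\<Sum>x\<in>R. qsc (f x) x) = (\<Sum>r\<in>R. qsc (q r) r)"
      by (rule sum.cong) (auto simp: f_def)
    also have "(\<Sum>x\<in>Bw. qsc (f x) x) = (\<Sum>x\<in>Bw. - qsc (u x) x)"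
      by (rule sum.cong) (use disj in \<open>auto simp: f_def Q.scale_minus_left\<close>)
    also have "\<dots> = - (\<Sum>x\<in>Bw. qsc (u x) x)" by (simp add: sum_negf)
    finally have "(\<Sum>x\<in>Bv. qsc (f x) x) = (\<Sum>r\<in>R. qsc (q r) r) + - (\<Sum>x\<in>Bw. qsc (u x) x)" .
    hence "(\<Sum>x\<in>Bv. qsc (f x) x) = 0" using u by (simp only: right_minus)
    hence "\<forall>v\<in>Bv. f v = 0"
      using Bv(3) unfolding Q.independent_explicit_finite_subsets using fBv by blast
    then show "\<forall>r\<in>R. q r = 0"
    proof (intro ballI)
      fix r assume "\<forall>v\<in>Bv. f v = 0" "r \<in> R"
      then have "f r = 0" using un by blast
      then show "q r = 0" using \<open>r \<in> R\<close> by (simp add: f_def)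
    qed
  qed
  moreover have "card R + Q.dim W = Q.dim V"
    using R_def card_Diff_subset[OF Bw(5) Bv(1)] cBv Bw(4) card_mono[OF fBv Bv(1)] by simp
  ultimately show ?thesis using fR R_def Bv(2) by blast
qed

definition emb :: "('b \<Rightarrow>\<^sub>0 int) \<Rightarrow> ('b \<Rightarrow> rat)" where
  "emb c = (\<lambda>x. of_int (poly_mapping.lookup c x))"

lemma emb_add: "emb (a + b) = emb a + emb b"
  by (simp add: emb_def fun_eq_iff lookup_add)

lemma emb_zero: "emb 0 = 0"
  by (simp add: emb_def fun_eq_iff)

lemma emb_cmul: "emb (frag_cmul i a) = qsc (of_int i) (emb a)"
  by (simp add: emb_def qsc_def fun_eq_iff)

lemma emb_sum: "emb (sum f A) = (\<Sum>x\<in>A. emb (f x))"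
  by (induction A rule: infinite_finite_induct) (auto simp: emb_zero emb_add)

lemma emb_inj: "inj emb"
  by (rule injI) (auto simp: emb_def fun_eq_iff intro: poly_mapping_eqI)

lemma emb_inj_on: "inj_on emb A"
  using emb_inj by (rule inj_on_subset) simp

definition zmod :: "('b \<Rightarrow>\<^sub>0 int) set \<Rightarrow> bool" where
  "zmod B \<longleftrightarrow> 0 \<in> B \<and> (\<forall>a\<in>B. \<forall>b\<in>B. a + b \<in> B) \<and> (\<forall>a\<in>B. \<forall>i. frag_cmul i a \<in> B)"

lemma zmod_sum: "zmod B \<Longrightarrow> (\<And>x. x \<in> A \<Longrightarrow> f x \<in> B) \<Longrightarrow> sum f A \<in> B"
  by (induction A rule: infinite_finite_induct) (auto simp: zmod_def)

definition zind :: "('b \<Rightarrow>\<^sub>0 int) set \<Rightarrow> ('b \<Rightarrow>\<^sub>0 int) set \<Rightarrow> bool" where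
  "zind B R \<longleftrightarrow> (\<forall>c. (\<Sum>r\<in>R. frag_cmul (c r) r) \<in> B \<longrightarrow> (\<forall>r\<in>R. c r = 0))"

lemma DEN:
  assumes "zmod B" "v \<in> Q.span (emb ` B)"
  shows "\<exists>m b. m > 0 \<and> b \<in> B \<and> qsc (of_int m) v = emb b"
  using assms(2)
proof (induction rule: Q.span_induct_alt)
  case base
  then show ?case using assms(1) by (intro exI[of _ 1] exI[of _ 0]) (auto simp: zmod_def emb_zero qsc_def zero_fun_def)
next
  case (step c x y)
  then obtain m b where mb: "m > 0" "b \<in> B" "qsc (of_int m) y = emb b" by blast
  obtain b0 where b0: "b0 \<in> B" "x = emb b0" using step by blast
  obtain p q where pq: "quotient_of c = (p, q)" by (cases "quotient_of c")
  have q0: "q > 0" using quotient_of_denom_pos[OF pq] .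
  have cpq: "c = of_int p / of_int q" using quotient_of_div[OF pq] .
  have "qsc (of_int (q * m)) (qsc c x + y) = emb (frag_cmul (p * m) b0 + frag_cmul q b)"
  proof -
    have yb: "\<And>a. of_int m * y a = emb b a" using mb(3) by (simp add: qsc_def fun_eq_iff)
    show ?thesis
      unfolding emb_add emb_cmul
      using q0 yb[symmetric]
      by (simp add: qsc_def fun_eq_iff b0 cpq field_simps)
  qed
  moreover have "frag_cmul (p * m) b0 + frag_cmul q b \<in> B"
    using assms(1) b0 mb by (simp add: zmod_def)
  moreover have "q * m > 0" using q0 mb by simp
  ultimately show ?case by blast
qed

lemma DEN2:
  fixes q :: "'x \<Rightarrow> rat"
  assumes "finite R"
  shows "\<exists>D::int. D > 0 \<and> (\<forall>r\<in>R. \<exists>z::int. of_int D * q r = of_int z)"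
  using assms
proof (induction R rule: finite_induct)
  case empty
  then show ?case by (intro exI[of _ 1]) simp
next
  case (insert a R)
  then obtain D where D: "D > 0" "\<forall>r\<in>R. \<exists>z::int. of_int D * q r = of_int z" by blast
  obtain n d where nd: "quotient_of (q a) = (n, d)" by (cases "quotient_of (q a)")
  have d0: "d > 0" using quotient_of_denom_pos[OF nd] .
  have qa: "q a = of_int n / of_int d" using quotient_of_div[OF nd] .
  have "\<forall>r\<in>insert a R. \<exists>z::int. of_int (D * d) * q r = of_int z"
  proof
    fix r assume "r \<in> insert a R"
    then show "\<exists>z::int. of_int (D * d) * q r = of_int z"
    proof
      assume "r = a"
      then show ?thesis using d0 by (intro exI[of _ "D * n"]) (simp add: qa)
    next
      assume "r \<in> R"
      then obtain z where "of_int D * q r = of_int z" using D by blast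
      then show ?thesis by (intro exI[of _ "d * z"]) (simp add: algebra_simps)
    qed
  qed
  then show ?case using D d0 by (intro exI[of _ "D * d"]) simp
qed

lemma emb_lin: "emb (\<Sum>r\<in>R. frag_cmul (c r) r) = (\<Sum>r\<in>R. qsc (of_int (c r)) (emb r))"
  by (simp add: emb_sum emb_cmul)

lemma TR1:
  assumes B: "zmod B" and R: "finite R" and zi: "zind B R"
  shows "qind (emb ` B) (emb ` R)"
  unfolding qind_def
proof (intro allI impI)
  fix q assume qs: "(\<Sum>r\<in>emb ` R. qsc (q r) r) \<in> Q.span (emb ` B)"
  define q' where "q' r = q (emb r)" for r
  have "(\<Sum>r\<in>emb ` R. qsc (q r) r) = (\<Sum>r\<in>R. qsc (q' r) (emb r))"
    using sum.reindex[OF emb_inj_on[of R]] by (simp add: q'_def)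
  with qs have qs': "(\<Sum>r\<in>R. qsc (q' r) (emb r)) \<in> Q.span (emb ` B)" by simp
  obtain D where D: "D > 0" "\<forall>r\<in>R. \<exists>z::int. of_int D * q' r = of_int z"
    using DEN2[OF R, of q'] by blast
  then obtain z where z: "\<forall>r\<in>R. of_int D * q' r = of_int (z r)" by (metis bchoice)
  have "qsc (of_int D) (\<Sum>r\<in>R. qsc (q' r) (emb r)) = (\<Sum>r\<in>R. qsc (of_int (z r)) (emb r))"
    using z by (simp add: Q.scale_sum_right Q.scale_scale)
  also have "\<dots> = emb (\<Sum>r\<in>R. frag_cmul (z r) r)" by (simp add: emb_lin)
  finally have "emb (\<Sum>r\<in>R. frag_cmul (z r) r) = qsc (of_int D) (\<Sum>r\<in>R. qsc (q' r) (emb r))" by simp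
  then have "emb (\<Sum>r\<in>R. frag_cmul (z r) r) \<in> Q.span (emb ` B)"
    using Q.span_scale[OF qs', of "of_int D"] by simp
  then obtain m b where mb: "m > 0" "b \<in> B" "qsc (of_int m) (emb (\<Sum>r\<in>R. frag_cmul (z r) r)) = emb b"
    using DEN[OF B] by blast
  have "qsc (of_int m) (emb (\<Sum>r\<in>R. frag_cmul (z r) r)) = emb (\<Sum>r\<in>R. frag_cmul (m * z r) r)"
    by (simp add: emb_lin Q.scale_sum_right Q.scale_scale)
  with mb have "emb (\<Sum>r\<in>R. frag_cmul (m * z r) r) = emb b" by simp
  hence "(\<Sum>r\<in>R. frag_cmul (m * z r) r) = b" by (rule injD[OF emb_inj])
  with mb(2) have "(\<Sum>r\<in>R. frag_cmul ((\<lambda>r. m * z r) r) r) \<in> B" by simp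
  with zi have "\<forall>r\<in>R. m * z r = 0" unfolding zind_def by (metis (no_types))
  with mb(1) have "\<forall>r\<in>R. z r = 0" by simp
  with z D(1) have "\<forall>r\<in>R. q' r = 0" by simp
  then show "\<forall>r\<in>emb ` R. q r = 0" by (simp add: q'_def)
qed

lemma TR2:
  assumes R: "finite R" and qi: "qind (emb ` B) (emb ` R)"
  shows "zind B R"
  unfolding zind_def
proof (intro allI impI)
  fix c assume cB: "(\<Sum>r\<in>R. frag_cmul (c r) r) \<in> B"
  define q where "q v = (of_int (c (inv_into UNIV emb v)) :: rat)" for v
  have "(\<Sum>v\<in>emb ` R. qsc (q v) v) = (\<Sum>r\<in>R. qsc (of_int (c r)) (emb r))"
    by (subst sum.reindex[OF emb_inj_on]) (simp add: q_def inv_into_f_f[OF emb_inj UNIV_I] comp_def)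
  also have "\<dots> = emb (\<Sum>r\<in>R. frag_cmul (c r) r)" by (simp add: emb_lin)
  finally have "(\<Sum>v\<in>emb ` R. qsc (q v) v) \<in> Q.span (emb ` B)"
    using cB Q.span_base[of _ "emb ` B"] by simp
  with qi have "\<forall>v\<in>emb ` R. q v = 0" unfolding qind_def by blast
  then show "\<forall>r\<in>R. c r = 0" by (simp add: q_def inv_into_f_f[OF emb_inj UNIV_I])
qed

lemma emb_span:
  assumes "K \<subseteq> {c. Poly_Mapping.keys c \<subseteq> S}"
  shows "emb ` K \<subseteq> Q.span ((\<lambda>s. emb (frag_of s)) ` S)"
proof
  fix v assume "v \<in> emb ` K"
  then obtain c where c: "c \<in> K" "v = emb c" by blast
  have eq: "c = (\<Sum>i \<in> Poly_Mapping.keys c. frag_cmul (poly_mapping.lookup c i) (frag_of i))"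
    using frag_expansion[of c] by (simp add: frag_extend_def)
  have "v = emb (\<Sum>i \<in> Poly_Mapping.keys c. frag_cmul (poly_mapping.lookup c i) (frag_of i))"
    using c(2) arg_cong[where f=emb, OF eq] by simp
  also have "\<dots> = (\<Sum>i \<in> Poly_Mapping.keys c. qsc (of_int (poly_mapping.lookup c i)) (emb (frag_of i)))"
    by (simp add: emb_sum emb_cmul)
  also have "\<dots> \<in> Q.span ((\<lambda>s. emb (frag_of s)) ` S)"
    using c(1) assms by (intro Q.span_sum Q.span_scale Q.span_base) auto
  finally show "v \<in> Q.span ((\<lambda>s. emb (frag_of s)) ` S)" .
qed

lemma rank_core:
  assumes S: "finite S" and K: "zmod K" "K \<subseteq> {c. Poly_Mapping.keys c \<subseteq> S}"
    and B: "zmod B" "B \<subseteq> K"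
  shows "Sup {card R | R. finite R \<and> R \<subseteq> K \<and> zind B R} = Q.dim (emb ` K) - Q.dim (emb ` B)"
proof (rule cSup_eq_maximum)
  let ?E = "(\<lambda>s. emb (frag_of s)) ` S"
  have E: "finite ?E" "emb ` K \<subseteq> Q.span ?E" using S emb_span[OF K(2)] by auto
  have WV: "emb ` B \<subseteq> emb ` K" using B by auto
  obtain R' where R': "finite R'" "R' \<subseteq> emb ` K" "qind (emb ` B) R'" "card R' + Q.dim (emb ` B) = Q.dim (emb ` K)"
    using LA2[OF E WV] by blast
  define R where "R = K \<inter> emb -` R'"
  have eR: "emb ` R = R'" using R'(2) R_def by auto
  have fR: "finite R" using finite_imageD[of emb R] eR R'(1) emb_inj_on by blast
  have "card R = card R'" using eR card_image[OF emb_inj_on, of R] by simp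
  moreover have "zind B R" using TR2[OF fR] R'(3) eR by simp
  ultimately show "Q.dim (emb ` K) - Q.dim (emb ` B) \<in> {card R | R. finite R \<and> R \<subseteq> K \<and> zind B R}"
    using R'(4) fR R_def by (intro CollectI exI[of _ R]) auto
  fix x assume "x \<in> {card R | R. finite R \<and> R \<subseteq> K \<and> zind B R}"
  then obtain R where R: "x = card R" "finite R" "R \<subseteq> K" "zind B R" by blast
  have "card (emb ` R) + Q.dim (emb ` B) \<le> Q.dim (emb ` K)"
    using LA1[OF E WV] R TR1[OF B(1) R(2,4)] by blast
  then show "x \<le> Q.dim (emb ` K) - Q.dim (emb ` B)"
    using R(1) card_image[OF emb_inj_on, of R] by simp
qed

lemma dim_mono_core:
  assumes S: "finite S" and K: "K \<subseteq> {c. Poly_Mapping.keys c \<subseteq> S}" and B: "B \<subseteq> K"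
  shows "Q.dim (emb ` B) \<le> Q.dim (emb ` K)"
proof -
  have E: "finite ((\<lambda>s. emb (frag_of s)) ` S)" "emb ` K \<subseteq> Q.span ((\<lambda>s. emb (frag_of s)) ` S)"
    using S emb_span[OF K] by auto
  have "\<exists>R. finite R \<and> R \<subseteq> emb ` K \<and> qind (emb ` B) R \<and> card R + Q.dim (emb ` B) = Q.dim (emb ` K)"
    using LA2[OF E, of "emb ` B"] B by blast
  then show ?thesis by auto
qed

lemma (in comm_group) coset_finprod:
  assumes H: "subgroup H G" and R: "finite R" "R \<subseteq> carrier G"
  shows "finprod (G Mod H) (\<lambda>r. (H #> r) [^]\<^bsub>G Mod H\<^esub> (c r :: int)) R = H #> finprod G (\<lambda>r. r [^] c r) R"
  using R
proof (induction R rule: finite_induct)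
  case empty
  interpret N: normal H G using H subgroup_imp_normal by blast
  interpret Q: comm_group "G Mod H" using abelian_FactGroup[OF H] .
  show ?case using N.rcos_const[OF is_group subgroup.one_closed[OF H]] by simp
next
  case (insert a R)
  interpret N: normal H G using H subgroup_imp_normal by blast
  interpret Q: comm_group "G Mod H" using abelian_FactGroup[OF H] .
  interpret h: group_hom G "G Mod H" "\<lambda>a. H #> a"
    by (simp add: N.r_coset_hom_Mod N.factorgroup_is_group group_hom_axioms_def group_hom_def is_group)
  have cl: "\<And>r. r \<in> carrier G \<Longrightarrow> (H #> r) \<in> carrier (G Mod H)"
    using h.hom_closed by blast
  have "finprod (G Mod H) (\<lambda>r. (H #> r) [^]\<^bsub>G Mod H\<^esub> c r) (insert a R)
      = (H #> a) [^]\<^bsub>G Mod H\<^esub> c a \<otimes>\<^bsub>G Mod H\<^esub> finprod (G Mod H) (\<lambda>r. (H #> r) [^]\<^bsub>G Mod H\<^esub> c r) R"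
    using insert cl by (intro Q.finprod_insert) auto
  also have "\<dots> = (H #> (a [^] c a)) \<otimes>\<^bsub>G Mod H\<^esub> (H #> finprod G (\<lambda>r. r [^] c r) R)"
    using insert h.hom_int_pow by simp
  also have "\<dots> = H #> (a [^] c a \<otimes> finprod G (\<lambda>r. r [^] c r) R)"
    using insert by (intro h.hom_mult[symmetric]) (auto intro!: finprod_closed)
  also have "a [^] c a \<otimes> finprod G (\<lambda>r. r [^] c r) R = finprod G (\<lambda>r. r [^] c r) (insert a R)"
    using insert by (intro finprod_insert[symmetric]) auto
  finally show ?case .
qed

lemma (in group) coset_eq_H:
  assumes H: "subgroup H G" and x: "x \<in> carrier G"
  shows "(H #> x = H) \<longleftrightarrow> x \<in> H"
  using subgroup.rcos_const[OF H is_group] rcos_self[OF x H] by auto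

definition zindG :: "('g, 'm) monoid_scheme \<Rightarrow> 'g set \<Rightarrow> 'g set \<Rightarrow> bool" where
  "zindG G H R \<longleftrightarrow> (\<forall>c::'g \<Rightarrow> int. finprod G (\<lambda>r. r [^]\<^bsub>G\<^esub> c r) R \<in> H \<longrightarrow> (\<forall>r\<in>R. c r = 0))"

lemma (in comm_group) quot_rank:
  assumes H: "subgroup H G"
  shows "ab_rank (G Mod H) = Sup {card R | R. finite R \<and> R \<subseteq> carrier G \<and> zindG G H R}"
proof -
  interpret N: normal H G using H subgroup_imp_normal by blast
  interpret Q: comm_group "G Mod H" using abelian_FactGroup[OF H] .
  interpret h: group_hom G "G Mod H" "\<lambda>a. H #> a"
    by (simp add: N.r_coset_hom_Mod N.factorgroup_is_group group_hom_axioms_def group_hom_def is_group)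
  have cl: "\<And>r. r \<in> carrier G \<Longrightarrow> (H #> r) \<in> carrier (G Mod H)"
    using h.hom_closed by blast
  have key: "finprod (G Mod H) (\<lambda>t. t [^]\<^bsub>G Mod H\<^esub> c' t) ((\<lambda>a. H #> a) ` R)
      = H #> finprod G (\<lambda>r. r [^] c' (H #> r)) R"
    if R: "finite R" "R \<subseteq> carrier G" "inj_on (\<lambda>a. H #> a) R" for R and c' :: "'a set \<Rightarrow> int"
  proof -
    have "finprod (G Mod H) (\<lambda>t. t [^]\<^bsub>G Mod H\<^esub> c' t) ((\<lambda>a. H #> a) ` R)
        = finprod (G Mod H) (\<lambda>r. (H #> r) [^]\<^bsub>G Mod H\<^esub> c' (H #> r)) R"
      using R cl by (intro Q.finprod_reindex) auto
    also have "\<dots> = H #> finprod G (\<lambda>r. r [^] c' (H #> r)) R"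
      using coset_finprod[OF H R(1,2)] .
    finally show ?thesis .
  qed
  have "{card T | T. finite T \<and> T \<subseteq> carrier (G Mod H) \<and> lin_indep_Z (G Mod H) T}
      = {card R | R. finite R \<and> R \<subseteq> carrier G \<and> zindG G H R}"
  proof (rule Set.set_eqI, rule iffI)
    fix n assume "n \<in> {card T | T. finite T \<and> T \<subseteq> carrier (G Mod H) \<and> lin_indep_Z (G Mod H) T}"
    then obtain T where T: "n = card T" "finite T" "T \<subseteq> carrier (G Mod H)" "lin_indep_Z (G Mod H) T"
      by blast
    define rep where "rep t = (SOME a. a \<in> carrier G \<and> t = H #> a)" for t
    have rep: "rep t \<in> carrier G \<and> t = H #> rep t" if "t \<in> T" for t
    proof -
      have "\<exists>a. a \<in> carrier G \<and> t = H #> a" using T(3) that by (auto simp: carrier_FactGroup)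
      then show ?thesis unfolding rep_def by (rule someI_ex)
    qed
    have inj: "inj_on rep T" using rep by (metis inj_onI)
    define R where "R = rep ` T"
    have RT: "(\<lambda>a. H #> a) ` R = T" using rep R_def by force
    have injh: "inj_on (\<lambda>a. H #> a) R"
      using rep R_def by (auto simp: inj_on_def)
    have fR: "finite R" "R \<subseteq> carrier G" using T(2) rep R_def by auto
    have "zindG G H R"
      unfolding zindG_def
    proof (intro allI impI)
      fix c :: "'a \<Rightarrow> int" assume cH: "finprod G (\<lambda>r. r [^] c r) R \<in> H"
      define c' where "c' t = c (rep t)" for t
      have "finprod G (\<lambda>r. r [^] c' (H #> r)) R = finprod G (\<lambda>r. r [^] c r) R"
      proof (intro finprod_cong')
        fix r assume "r \<in> R"
        then obtain t where t: "t \<in> T" "r = rep t" using R_def by blast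
        then have "H #> r = t" using rep by metis
        then show "r [^] c' (H #> r) = r [^] c r" using t by (simp add: c'_def)
      qed (use fR in auto)
      then have "finprod (G Mod H) (\<lambda>t. t [^]\<^bsub>G Mod H\<^esub> c' t) T = \<one>\<^bsub>G Mod H\<^esub>"
        using key[OF fR injh, of c'] RT cH coset_eq_H[OF H] fR by (simp add: finprod_closed)
      then have "\<forall>t\<in>T. c' t = 0" using spec[OF T(4)[unfolded lin_indep_Z_def], of c'] by simp
      then show "\<forall>r\<in>R. c r = 0" using R_def c'_def by auto
    qed
    moreover have "card R = n" using T(1) R_def card_image[OF inj] by simp
    ultimately show "n \<in> {card R | R. finite R \<and> R \<subseteq> carrier G \<and> zindG G H R}"
      using fR by blast
  next
    fix n assume "n \<in> {card R | R. finite R \<and> R \<subseteq> carrier G \<and> zindG G H R}"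
    then obtain R where R: "n = card R" "finite R" "R \<subseteq> carrier G" "zindG G H R" by blast
    have injh: "inj_on (\<lambda>a. H #> a) R"
    proof (rule inj_onI, rule ccontr)
      fix a b assume ab: "a \<in> R" "b \<in> R" "H #> a = H #> b" "a \<noteq> b"
      define c :: "'a \<Rightarrow> int" where "c r = (if r = a then 1 else if r = b then -1 else 0)" for r
      define R0 where "R0 = R - {a, b}"
      have R0: "finite R0" "a \<notin> R0" "b \<notin> R0" "R = insert a (insert b R0)" "R0 \<subseteq> carrier G"
        using R ab R0_def by auto
      have ac: "a \<in> carrier G" "b \<in> carrier G" using ab R by auto
      have "finprod G (\<lambda>r. r [^] c r) R = a [^] c a \<otimes> (b [^] c b \<otimes> finprod G (\<lambda>r. r [^] c r) R0)"
        using R0 ac ab(4) by (simp add: Pi_def subset_iff)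
      also have "finprod G (\<lambda>r. r [^] c r) R0 = \<one>"
        using R0 by (intro finprod_one_eqI) (auto simp: c_def)
      also have "a [^] c a \<otimes> (b [^] c b \<otimes> \<one>) = a \<otimes> inv b"
        using ab ac by (simp add: c_def int_pow_neg)
      finally have "finprod G (\<lambda>r. r [^] c r) R = a \<otimes> inv b" .
      moreover have "a \<otimes> inv b \<in> H"
      proof -
        have "a \<in> H #> b" using ab(3) rcos_self[OF ac(1) H] by simp
        then show ?thesis using subgroup.rcos_module_imp[OF H is_group ac(2)] by blast
      qed
      ultimately have "\<forall>r\<in>R. c r = 0" using spec[OF R(4)[unfolded zindG_def], of c] by simp
      then have "c a = 0" using ab(1) by blast
      then show False by (simp add: c_def)
    qed
    define T where "T = (\<lambda>a. H #> a) ` R"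
    have "lin_indep_Z (G Mod H) T"
      unfolding lin_indep_Z_def
    proof (intro allI impI)
      fix c' :: "'a set \<Rightarrow> int" assume "finprod (G Mod H) (\<lambda>t. t [^]\<^bsub>G Mod H\<^esub> c' t) T = \<one>\<^bsub>G Mod H\<^esub>"
      then have "H #> finprod G (\<lambda>r. r [^] c' (H #> r)) R = H"
        using key[OF R(2,3) injh, of c'] T_def by simp
      then have "finprod G (\<lambda>r. r [^] c' (H #> r)) R \<in> H"
        using coset_eq_H[OF H] R by (simp add: finprod_closed Pi_def subset_iff)
      then have "\<forall>r\<in>R. c' (H #> r) = 0" using spec[OF R(4)[unfolded zindG_def], of "\<lambda>r. c' (H #> r)"] by simp
      then show "\<forall>t\<in>T. c' t = 0" using T_def by blast
    qed
    moreover have "card T = n" using R(1) T_def card_image[OF injh] by simp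
    moreover have "finite T" "T \<subseteq> carrier (G Mod H)" using T_def R cl by auto
    ultimately show "n \<in> {card T | T. finite T \<and> T \<subseteq> carrier (G Mod H) \<and> lin_indep_Z (G Mod H) T}"
      by blast
  qed
  then show ?thesis unfolding ab_rank_def by simp
qed

lemma finprod_plus:
  fixes G :: "('b::comm_monoid_add) monoid"
  assumes G: "comm_monoid G" "\<And>x y. x \<in> carrier G \<Longrightarrow> y \<in> carrier G \<Longrightarrow> x \<otimes>\<^bsub>G\<^esub> y = x + y"
    "\<one>\<^bsub>G\<^esub> = 0"
    and A: "finite A" "f \<in> A \<rightarrow> carrier G"
  shows "finprod G f A = sum f A"
  using A
proof (induction A rule: finite_induct)
  case empty
  then show ?case using G by (simp add: comm_monoid.finprod_empty)
next
  case (insert a A)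
  have "finprod G f (insert a A) = f a \<otimes>\<^bsub>G\<^esub> finprod G f A"
    using insert by (intro comm_monoid.finprod_insert[OF G(1)]) auto
  also have "\<dots> = f a + finprod G f A"
  proof -
    have cl: "finprod G f A \<in> carrier G"
      using insert.prems by (intro comm_monoid.finprod_closed[OF G(1)]) auto
    have fa: "f a \<in> carrier G" using insert.prems by blast
    show ?thesis using G(2)[OF fa cl] .
  qed
  finally show ?case using insert by simp
qed

lemma zmod_subgroup:
  assumes "zmod K" "K \<subseteq> {c. Poly_Mapping.keys c \<subseteq> S}"
  shows "subgroup K (free_Abelian_group S)"
proof (rule group.subgroupI)
  show "group (free_Abelian_group S)" by simp
  show "K \<subseteq> carrier (free_Abelian_group S)" using assms(2) by auto
  show "K \<noteq> {}" using assms(1) by (auto simp: zmod_def)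
  fix a b assume "a \<in> K" "b \<in> K"
  then show "a \<otimes>\<^bsub>free_Abelian_group S\<^esub> b \<in> K" using assms(1) by (simp add: zmod_def)
next
  fix a assume a: "a \<in> K"
  then have "inv\<^bsub>free_Abelian_group S\<^esub> a = frag_cmul (-1) a" using assms(2) by auto
  moreover have "frag_cmul (-1) a \<in> K" using a assms(1) unfolding zmod_def by blast
  ultimately show "inv\<^bsub>free_Abelian_group S\<^esub> a \<in> K" by simp
qed

lemma finprod_free:
  assumes R: "finite R" "R \<subseteq> {c. Poly_Mapping.keys c \<subseteq> S}"
  shows "finprod (free_Abelian_group S) (\<lambda>r. r [^]\<^bsub>free_Abelian_group S\<^esub> (c r :: int)) R
       = (\<Sum>r\<in>R. frag_cmul (c r) r)"
proof -
  have "finprod (free_Abelian_group S) (\<lambda>r. r [^]\<^bsub>free_Abelian_group S\<^esub> (c r :: int)) R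
      = (\<Sum>r\<in>R. r [^]\<^bsub>free_Abelian_group S\<^esub> (c r :: int))"
    using R by (intro finprod_plus abelian_free_Abelian_group[THEN comm_group.axioms(1)])
      (auto intro!: group.int_pow_closed)
  also have "\<dots> = (\<Sum>r\<in>R. frag_cmul (c r) r)"
    using R by (intro sum.cong) auto
  finally show ?thesis .
qed

lemma finprod_sub:
  assumes K: "subgroup K (free_Abelian_group S)" and R: "finite R" "R \<subseteq> K"
  shows "finprod (subgroup_generated (free_Abelian_group S) K) (\<lambda>r. r [^]\<^bsub>subgroup_generated (free_Abelian_group S) K\<^esub> (c r :: int)) R
       = (\<Sum>r\<in>R. frag_cmul (c r) r)"
proof -
  let ?F = "free_Abelian_group S"
  let ?G = "subgroup_generated ?F K"
  have cG: "carrier ?G = K" using subgroup.carrier_subgroup_generated_subgroup[OF K] .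
  have grp: "group ?F" by simp
  have cgG: "comm_group ?G"
    using group.abelian_subgroup_generated[OF grp abelian_free_Abelian_group] .
  have KS: "K \<subseteq> {c. Poly_Mapping.keys c \<subseteq> S}"
  proof
    fix x assume "x \<in> K"
    then have "x \<in> carrier ?F" using subgroup.subset[OF K] by blast
    then show "x \<in> {c. Poly_Mapping.keys c \<subseteq> S}" by simp
  qed
  have pw: "r [^]\<^bsub>?G\<^esub> (i::int) = frag_cmul i r" if "r \<in> K" for r i
  proof -
    have "r [^]\<^bsub>?G\<^esub> i = r [^]\<^bsub>?F\<^esub> i"
      using group.int_pow_subgroup_generated[OF grp] that cG by simp
    also have "\<dots> = frag_cmul i r" using that KS by auto
    finally show ?thesis .
  qed
  have "finprod ?G (\<lambda>r. r [^]\<^bsub>?G\<^esub> (c r :: int)) R = (\<Sum>r\<in>R. r [^]\<^bsub>?G\<^esub> (c r :: int))"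
    using R cG by (intro finprod_plus cgG[THEN comm_group.axioms(1)])
      (auto intro!: group.int_pow_closed[OF comm_group.axioms(2)[OF cgG]])
  also have "\<dots> = (\<Sum>r\<in>R. frag_cmul (c r) r)"
    using R pw by (intro sum.cong) auto
  finally show ?thesis .
qed

lemma dim_zero: "Q.dim {0 :: 'b \<Rightarrow> rat} = 0"
  using Q.dim_eq_card[of "{}" "{0}"] by (simp add: Q.span_insert_0 Q.independent_empty)

lemma rank_free:
  fixes S :: "'a set"
  assumes S: "finite S"
  shows "ab_rank (free_Abelian_group S) = Q.dim (emb ` {c. Poly_Mapping.keys c \<subseteq> S})"
proof -
  let ?K = "{c. Poly_Mapping.keys c \<subseteq> S}"
  have zK: "zmod ?K" unfolding zmod_def
    by (auto simp: keys_add[THEN subset_trans] dest: subsetD[OF keys_cmul] subsetD[OF keys_add])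
  have z0: "zmod ({0} :: ('a \<Rightarrow>\<^sub>0 int) set)" by (simp add: zmod_def)
  have "{card R | R. finite R \<and> R \<subseteq> carrier (free_Abelian_group S) \<and> lin_indep_Z (free_Abelian_group S) R}
     = {card R | R. finite R \<and> R \<subseteq> ?K \<and> zind {0} R}"
  proof -
    have "lin_indep_Z (free_Abelian_group S) R \<longleftrightarrow> zind {0} R" if "finite R" "R \<subseteq> ?K" for R
      unfolding lin_indep_Z_def zind_def using finprod_free[OF that] by simp
    moreover have cF: "carrier (free_Abelian_group S) = ?K" by auto
    ultimately have eqv: "(finite R \<and> R \<subseteq> carrier (free_Abelian_group S) \<and> lin_indep_Z (free_Abelian_group S) R)
       = (finite R \<and> R \<subseteq> ?K \<and> zind {0} R)" for R by blast
    show ?thesis by (simp only: eqv)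
  qed
  then have "ab_rank (free_Abelian_group S) = Sup {card R | R. finite R \<and> R \<subseteq> ?K \<and> zind {0} R}"
    unfolding ab_rank_def by simp
  also have "\<dots> = Q.dim (emb ` ?K) - Q.dim (emb ` ({0} :: ('a \<Rightarrow>\<^sub>0 int) set))"
    by (rule rank_core[OF S zK _ z0]) auto
  finally have "ab_rank (free_Abelian_group S) = Q.dim (emb ` ?K) - Q.dim (emb ` ({0} :: ('a \<Rightarrow>\<^sub>0 int) set))" .
  then show ?thesis by (simp add: emb_zero dim_zero)
qed

lemma rank_quot:
  assumes S: "finite S" and K: "zmod K" "K \<subseteq> {c. Poly_Mapping.keys c \<subseteq> S}"
    and B: "zmod B" "B \<subseteq> K"
  shows "ab_rank (subgroup_generated (free_Abelian_group S) K Mod B) = Q.dim (emb ` K) - Q.dim (emb ` B)"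
proof -
  let ?F = "free_Abelian_group S"
  let ?G = "subgroup_generated ?F K"
  have grp: "group ?F" by simp
  have sK: "subgroup K ?F" using zmod_subgroup[OF K] .
  have sB: "subgroup B ?F" using zmod_subgroup[OF B(1)] B(2) K(2) by blast
  have cG: "carrier ?G = K" using subgroup.carrier_subgroup_generated_subgroup[OF sK] .
  have cgG: "comm_group ?G"
    using group.abelian_subgroup_generated[OF grp abelian_free_Abelian_group] .
  have sBG: "subgroup B ?G" using group.subgroup_of_subgroup_generated[OF grp B(2) sB] .
  have "ab_rank (?G Mod B) = Sup {card R | R. finite R \<and> R \<subseteq> carrier ?G \<and> zindG ?G B R}"
    using comm_group.quot_rank[OF cgG sBG] .
  also have "{card R | R. finite R \<and> R \<subseteq> carrier ?G \<and> zindG ?G B R}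
      = {card R | R. finite R \<and> R \<subseteq> K \<and> zind B R}"
  proof -
    have "zindG ?G B R \<longleftrightarrow> zind B R" if "finite R" "R \<subseteq> K" for R
      unfolding zindG_def zind_def using finprod_sub[OF sK that] by simp
    then have eqv: "(finite R \<and> R \<subseteq> carrier ?G \<and> zindG ?G B R)
       = (finite R \<and> R \<subseteq> K \<and> zind B R)" for R using cG by blast
    show ?thesis by (simp only: eqv)
  qed
  also have "Sup \<dots> = Q.dim (emb ` K) - Q.dim (emb ` B)"
    using rank_core[OF S K B] .
  finally show ?thesis .
qed

fun tl2 :: "('a \<Rightarrow> 'a \<Rightarrow> real) \<Rightarrow> 'a list \<Rightarrow> real" where
  "tl2 d (x # y # zs) = d x y + tl2 d (y # zs)"
| "tl2 d _ = 0"

lemma tuple_length_tl2: "tuple_length d xs = tl2 d xs"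
proof (induction d xs rule: tl2.induct)
  case (1 d x y zs)
  have "tuple_length d (x # y # zs) = (\<Sum>i<Suc (length zs). d ((x # y # zs) ! i) ((x # y # zs) ! Suc i))"
    by (simp add: tuple_length_def)
  also have "\<dots> = d x y + (\<Sum>i<length zs. d ((y # zs) ! i) ((y # zs) ! Suc i))"
    by (subst sum.lessThan_Suc_shift) simp
  also have "(\<Sum>i<length zs. d ((y # zs) ! i) ((y # zs) ! Suc i)) = tuple_length d (y # zs)"
    by (simp add: tuple_length_def)
  finally show ?case using 1 by simp
qed (auto simp: tuple_length_def)

lemma tl2_append: "tl2 d (xs @ y # ys) = tl2 d (xs @ [y]) + tl2 d (y # ys)"
  by (induction d xs rule: tl2.induct) auto

lemma tl2_snoc2: "tl2 d (xs @ [p, y]) = tl2 d (xs @ [p]) + d p y"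
  using tl2_append[of d xs p "[y]"] by simp

lemma del_decomp:
  assumes "i < length xs"
  shows "xs = take i xs @ xs ! i # drop (Suc i) xs" "delete_at i xs = take i xs @ drop (Suc i) xs"
  using assms id_take_nth_drop by (auto simp: delete_at_def)

lemma qm_facts:
  assumes "quasi_metric X d"
  shows "\<And>x y. x \<in> X \<Longrightarrow> y \<in> X \<Longrightarrow> 0 \<le> d x y"
    "\<And>x. x \<in> X \<Longrightarrow> d x x = 0"
    "\<And>x y z. x \<in> X \<Longrightarrow> y \<in> X \<Longrightarrow> z \<in> X \<Longrightarrow> d x z \<le> d x y + d y z"
    "\<And>x y. x \<in> X \<Longrightarrow> y \<in> X \<Longrightarrow> x \<noteq> y \<Longrightarrow> 0 < d x y"
  using assms unfolding quasi_metric_def by blast+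

lemma del_mid:
  assumes qm: "quasi_metric X d" and X: "set (A @ a # B) \<subseteq> X"
  shows "tl2 d (A @ B) \<le> tl2 d (A @ a # B)"
    and "successively (\<noteq>) (A @ a # B) \<Longrightarrow> tl2 d (A @ B) = tl2 d (A @ a # B) \<Longrightarrow> A @ B \<noteq> []
         \<Longrightarrow> successively (\<noteq>) (A @ B)"
proof -
  note q = qm_facts[OF qm]
  have "(tl2 d (A @ B) \<le> tl2 d (A @ a # B)) \<and>
    (successively (\<noteq>) (A @ a # B) \<longrightarrow> tl2 d (A @ B) = tl2 d (A @ a # B) \<longrightarrow> A @ B \<noteq> []
         \<longrightarrow> successively (\<noteq>) (A @ B))"
  proof (cases A rule: rev_exhaust)
    case Nil
    then show ?thesis
    proof (cases B)
      case Nil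
      then show ?thesis using \<open>A = []\<close> by simp
    next
      case (Cons b B')
      have "a \<in> X" "b \<in> X" using X Cons \<open>A = []\<close> by auto
      then show ?thesis using q(1)[of a b] q(4)[of a b] Cons \<open>A = []\<close> by auto
    qed
  next
    case (snoc A' p)
    then show ?thesis
    proof (cases B)
      case Nil
      have "a \<in> X" "p \<in> X" using X Nil snoc by auto
      then show ?thesis using q(1)[of p a] q(4)[of p a] Nil snoc
        by (auto simp: tl2_snoc2 successively_append_iff)
    next
      case (Cons b B')
      have X3: "a \<in> X" "p \<in> X" "b \<in> X" using X Cons snoc by auto
      have e1: "tl2 d (A @ a # B) = tl2 d (A' @ [p]) + d p a + d a b + tl2 d (b # B')"
        using tl2_append[of d "A' @ [p]" a B] tl2_snoc2[of d A' p a] snoc Cons by simp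
      have e2: "tl2 d (A @ B) = tl2 d (A' @ [p]) + d p b + tl2 d (b # B')"
        using tl2_append[of d "A' @ [p]" b B'] snoc Cons tl2_snoc2[of d A' p b] by simp
      have tri: "d p b \<le> d p a + d a b" using q(3) X3 by blast
      have "successively (\<noteq>) (A @ B)"
        if s: "successively (\<noteq>) (A @ a # B)" and eq: "tl2 d (A @ B) = tl2 d (A @ a # B)"
      proof -
        have pa: "p \<noteq> a" and ab: "a \<noteq> b" and sA: "successively (\<noteq>) A" and sB: "successively (\<noteq>) B"
          using s snoc Cons by (auto simp: successively_append_iff)
        have "p \<noteq> b"
        proof
          assume "p = b"
          then have "d p a + d a p = 0" using eq e1 e2 q(2) X3 by simp
          moreover have "0 < d p a" "0 \<le> d a p" using q(4)[of p a] q(1)[of a p] X3 pa by auto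
          ultimately show False by simp
        qed
        then show ?thesis using sA sB snoc Cons by (auto simp: successively_append_iff)
      qed
      then show ?thesis using e1 e2 tri by simp
    qed
  qed
  then show "tl2 d (A @ B) \<le> tl2 d (A @ a # B)"
    and "successively (\<noteq>) (A @ a # B) \<Longrightarrow> tl2 d (A @ B) = tl2 d (A @ a # B) \<Longrightarrow> A @ B \<noteq> []
         \<Longrightarrow> successively (\<noteq>) (A @ B)" by blast+
qed

lemma length_delete_at: "i < length xs \<Longrightarrow> length (delete_at i xs) = length xs - 1"
  by (simp add: delete_at_def)

lemma nth_delete_at: "i < length xs \<Longrightarrow> k < length xs - 1 \<Longrightarrow>
   delete_at i xs ! k = (if k < i then xs ! k else xs ! Suc k)"
  by (auto simp: delete_at_def nth_append min_def)

lemma delete_at_comm: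
  assumes "i < j" "j < length xs"
  shows "delete_at i (delete_at j xs) = delete_at (j - 1) (delete_at i xs)"
proof (rule nth_equalityI)
  show "length (delete_at i (delete_at j xs)) = length (delete_at (j - 1) (delete_at i xs))"
    using assms by (simp add: length_delete_at)
  fix k assume k: "k < length (delete_at i (delete_at j xs))"
  then have k': "k < length xs - 2" using assms by (simp add: length_delete_at)
  show "delete_at i (delete_at j xs) ! k = delete_at (j - 1) (delete_at i xs) ! k"
    using assms k' by (auto simp add: nth_delete_at length_delete_at)
qed

lemma set_delete_at: "set (delete_at i xs) \<subseteq> set xs"
  unfolding delete_at_def using set_take_subset set_drop_subset by fastforce

lemma del_obtain:
  assumes "i < length xs"
  obtains A a B where "xs = A @ a # B" "delete_at i xs = A @ B" "length A = i"
proof -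
  define A where "A = take i xs"
  define a where "a = xs ! i"
  define B where "B = drop (Suc i) xs"
  have "xs = A @ a # B" "delete_at i xs = A @ B" "length A = i"
    using del_decomp[OF assms] assms unfolding A_def B_def a_def by auto
  then show ?thesis using that by blast
qed

lemma delete_mono:
  assumes qm: "quasi_metric X d" and X: "set xs \<subseteq> X"
  shows "tuple_length d (delete_at i xs) \<le> tuple_length d xs"
proof (cases "i < length xs")
  case True
  obtain A a B where e: "xs = A @ a # B" "delete_at i xs = A @ B" using del_obtain[OF True] by blast
  show ?thesis using del_mid(1)[OF qm, of A a B] e X
    by (simp add: tuple_length_tl2)
next
  case False
  then show ?thesis by (simp add: delete_at_def)
qed

lemma delete_gens:
  assumes qm: "quasi_metric X d" and xs: "xs \<in> nerve_gens X d (Suc n) l" and i: "i \<le> Suc n"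
    and eq: "tuple_length d (delete_at i xs) = tuple_length d xs"
  shows "delete_at i xs \<in> nerve_gens X d n l"
proof -
  have len: "length xs = Suc (Suc n)" and X: "set xs \<subseteq> X" and tl: "tuple_length d xs = l"
    and sc: "successively (\<noteq>) xs"
    using xs by (auto simp: nerve_gens_def successively_conv_nth)
  have il: "i < length xs" using i len by simp
  obtain A a B where e: "xs = A @ a # B" "delete_at i xs = A @ B" using del_obtain[OF il] by blast
  have ne: "A @ B \<noteq> []" using e len by (cases A) auto
  have "successively (\<noteq>) (A @ B)"
    using del_mid(2)[OF qm, of A a B] e X sc eq ne
    by (simp add: tuple_length_tl2)
  then have "successively (\<noteq>) (delete_at i xs)" using e by simp
  then show ?thesis using len X tl eq il set_delete_at[of i xs]
    by (auto simp: nerve_gens_def successively_conv_nth length_delete_at)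
qed

lemma bd_add: "nerve_boundary d n (a + b) = nerve_boundary d n a + nerve_boundary d n b"
  by (simp add: nerve_boundary_def frag_extend_add)

lemma bd_cmul: "nerve_boundary d n (frag_cmul k a) = frag_cmul k (nerve_boundary d n a)"
  by (simp add: nerve_boundary_def frag_extend_cmul)

lemma bd_zero: "nerve_boundary d n 0 = 0"
  by (simp add: nerve_boundary_def)

lemma bd_sum: "nerve_boundary d n (sum f A) = (\<Sum>a\<in>A. nerve_boundary d n (f a))"
  by (induction A rule: infinite_finite_induct) (auto simp: bd_zero bd_add)

lemma keys_face: "Poly_Mapping.keys (nerve_face d i xs) \<subseteq>
    (if tuple_length d (delete_at i xs) = tuple_length d xs then {delete_at i xs} else {})"
  by (simp add: nerve_face_def)

lemma bd_closed:
  assumes qm: "quasi_metric X d" and c: "Poly_Mapping.keys c \<subseteq> nerve_gens X d (Suc n) l"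
  shows "Poly_Mapping.keys (nerve_boundary d (Suc n) c) \<subseteq> nerve_gens X d n l"
proof -
  have "Poly_Mapping.keys (nerve_boundary d (Suc n) c) \<subseteq>
      (\<Union>x \<in> Poly_Mapping.keys c. Poly_Mapping.keys (\<Sum>i\<le>Suc n. frag_cmul ((-1) ^ i) (nerve_face d i x)))"
    unfolding nerve_boundary_def by (simp add: keys_frag_extend)
  also have "\<dots> \<subseteq> nerve_gens X d n l"
  proof (intro UN_least)
    fix x assume x: "x \<in> Poly_Mapping.keys c"
    have "Poly_Mapping.keys (\<Sum>i\<le>Suc n. frag_cmul ((-1) ^ i) (nerve_face d i x))
        \<subseteq> (\<Union>i\<le>Suc n. Poly_Mapping.keys (frag_cmul ((-1) ^ i) (nerve_face d i x)))"
      by (rule keys_sum)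
    also have "\<dots> \<subseteq> (\<Union>i\<le>Suc n. Poly_Mapping.keys (nerve_face d i x))"
      using keys_cmul by blast
    also have "\<dots> \<subseteq> nerve_gens X d n l"
    proof (intro UN_least)
      fix i assume i: "i \<in> {..Suc n}"
      show "Poly_Mapping.keys (nerve_face d i x) \<subseteq> nerve_gens X d n l"
        using keys_face[of d i x] delete_gens[OF qm, of x n l i] x c i
        by (auto split: if_splits)
    qed
    finally show "Poly_Mapping.keys (\<Sum>i\<le>Suc n. frag_cmul ((-1) ^ i) (nerve_face d i x)) \<subseteq> nerve_gens X d n l" .
  qed
  finally show ?thesis .
qed

lemma cancel_pairs:
  fixes G :: "nat \<Rightarrow> nat \<Rightarrow> 'x \<Rightarrow>\<^sub>0 int"
  assumes G: "\<And>i j. i < j \<Longrightarrow> j \<le> Suc N \<Longrightarrow> G (j - 1) i = G i j"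
  shows "(\<Sum>j\<le>Suc N. \<Sum>i\<le>N. frag_cmul ((-1) ^ (i + j)) (G i j)) = 0"
proof -
  define t where "t p = frag_cmul ((-1) ^ (snd p + fst p)) (G (snd p) (fst p))" for p
  define A where "A = {..Suc N} \<times> {..N}"
  define A1 where "A1 = {p \<in> A. snd p < fst p}"
  define A2 where "A2 = {p \<in> A. fst p \<le> snd p}"
  have "(\<Sum>j\<le>Suc N. \<Sum>i\<le>N. frag_cmul ((-1) ^ (i + j)) (G i j)) = sum t A"
    unfolding A_def t_def by (simp add: sum.cartesian_product case_prod_beta)
  also have "A = A1 \<union> A2" unfolding A1_def A2_def by auto
  also have "sum t (A1 \<union> A2) = sum t A1 + sum t A2"
    by (rule sum.union_disjoint) (auto simp: A1_def A2_def A_def)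
  also have "sum t A1 = sum (\<lambda>p. - t p) A2"
  proof (rule sum.reindex_bij_witness[where i = "\<lambda>p. (Suc (snd p), fst p)" and j = "\<lambda>p. (snd p, fst p - 1)"])
    fix a assume a: "a \<in> A1"
    then show "(Suc (snd (snd a, fst a - 1)), fst (snd a, fst a - 1)) = a" by (auto simp: A1_def)
    show "(snd a, fst a - 1) \<in> A2" using a by (auto simp: A1_def A2_def A_def)
    have "G (fst a - 1) (snd a) = G (snd a) (fst a)" using a G by (auto simp: A1_def A_def)
    moreover have "(-1::int) ^ (fst a - 1 + snd a) = - ((-1) ^ (snd a + fst a))"
    proof -
      have "fst a = Suc (fst a - 1)" using a by (auto simp: A1_def)
      then have "(-1::int) ^ (snd a + fst a) = (-1) ^ Suc (fst a - 1 + snd a)"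
        by (metis add.commute add_Suc_right)
      then show ?thesis by simp
    qed
    ultimately show "- t (snd a, fst a - 1) = t a" by (simp add: t_def)
  next
    fix b assume b: "b \<in> A2"
    then show "(snd (Suc (snd b), fst b), fst (Suc (snd b), fst b) - 1) = b" by auto
    show "(Suc (snd b), fst b) \<in> A1" using b by (auto simp: A1_def A2_def A_def)
  qed
  also have "sum (\<lambda>p. - t p) A2 + sum t A2 = 0" by (simp add: sum_negf)
  finally show ?thesis .
qed

lemma face_face:
  assumes qm: "quasi_metric X d" and X: "set x \<subseteq> X"
  shows "nerve_boundary d (Suc m) (nerve_face d j x)
    = (\<Sum>i\<le>Suc m. frag_cmul ((-1) ^ i)
        (if tuple_length d (delete_at i (delete_at j x)) = tuple_length d x
         then frag_of (delete_at i (delete_at j x)) else 0))"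
proof -
  have X': "set (delete_at j x) \<subseteq> X" using subset_trans[OF set_delete_at X] .
  have m1: "tuple_length d (delete_at j x) \<le> tuple_length d x" using delete_mono[OF qm X] .
  have m2: "tuple_length d (delete_at i (delete_at j x)) \<le> tuple_length d (delete_at j x)" for i
    using delete_mono[OF qm X'] .
  show ?thesis
  proof (cases "tuple_length d (delete_at j x) = tuple_length d x")
    case True
    have "nerve_face d j x = frag_of (delete_at j x)" using True by (simp add: nerve_face_def)
    then have "nerve_boundary d (Suc m) (nerve_face d j x)
        = (\<Sum>i\<le>Suc m. frag_cmul ((-1) ^ i) (nerve_face d i (delete_at j x)))"
      by (simp add: nerve_boundary_def)
    also have "\<dots> = (\<Sum>i\<le>Suc m. frag_cmul ((-1) ^ i)
        (if tuple_length d (delete_at i (delete_at j x)) = tuple_length d x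
         then frag_of (delete_at i (delete_at j x)) else 0))"
    proof (rule sum.cong[OF refl])
      fix i
      show "frag_cmul ((-1) ^ i) (nerve_face d i (delete_at j x)) = frag_cmul ((-1) ^ i)
        (if tuple_length d (delete_at i (delete_at j x)) = tuple_length d x
         then frag_of (delete_at i (delete_at j x)) else 0)"
        unfolding nerve_face_def True ..
    qed
    finally show ?thesis .
  next
    case False
    then have nz: "tuple_length d (delete_at i (delete_at j x)) \<noteq> tuple_length d x" for i
      using m1 m2[of i] by linarith
    have "nerve_face d j x = 0" using False by (simp add: nerve_face_def)
    then have "nerve_boundary d (Suc m) (nerve_face d j x) = 0" by (simp add: bd_zero)
    also have "0 = (\<Sum>i\<le>Suc m. frag_cmul ((-1) ^ i)
        (if tuple_length d (delete_at i (delete_at j x)) = tuple_length d x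
         then frag_of (delete_at i (delete_at j x)) else 0))"
      using nz by simp
    finally show ?thesis .
  qed
qed

lemma bd_bd_gen:
  assumes qm: "quasi_metric X d" and X: "set x \<subseteq> X" and len: "length x = Suc (Suc (Suc m))"
  shows "nerve_boundary d (Suc m) (\<Sum>j\<le>Suc (Suc m). frag_cmul ((-1) ^ j) (nerve_face d j x)) = 0"
proof -
  define G where "G i j = (if tuple_length d (delete_at i (delete_at j x)) = tuple_length d x
         then frag_of (delete_at i (delete_at j x)) else (0 :: 'a list \<Rightarrow>\<^sub>0 int))" for i j
  have "nerve_boundary d (Suc m) (\<Sum>j\<le>Suc (Suc m). frag_cmul ((-1) ^ j) (nerve_face d j x))
      = (\<Sum>j\<le>Suc (Suc m). frag_cmul ((-1) ^ j) (\<Sum>i\<le>Suc m. frag_cmul ((-1) ^ i) (G i j)))"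
    by (simp only: bd_sum bd_cmul face_face[OF qm X] G_def)
  also have "\<dots> = (\<Sum>j\<le>Suc (Suc m). \<Sum>i\<le>Suc m. frag_cmul ((-1) ^ (i + j)) (G i j))"
    by (simp only: frag_cmul_sum frag_cmul_cmul)
      (intro sum.cong[OF refl], simp add: power_add mult.commute)
  also have "\<dots> = 0"
  proof (rule cancel_pairs)
    fix i j assume ij: "i < j" "j \<le> Suc (Suc m)"
    have "delete_at (j - 1) (delete_at i x) = delete_at i (delete_at j x)"
      using delete_at_comm[of i j x] ij len by simp
    then show "G (j - 1) i = G i j" by (simp add: G_def)
  qed
  finally show ?thesis .
qed

lemma bd_bd:
  assumes qm: "quasi_metric X d" and c: "Poly_Mapping.keys c \<subseteq> nerve_gens X d (Suc n) l"
  shows "nerve_boundary d n (nerve_boundary d (Suc n) c) = 0"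
proof (cases n)
  case 0
  then show ?thesis by (simp add: nerve_boundary_def)
next
  case (Suc m)
  have "nerve_boundary d (Suc n) c = (\<Sum>x\<in>Poly_Mapping.keys c. frag_cmul (poly_mapping.lookup c x)
        (\<Sum>j\<le>Suc (Suc m). frag_cmul ((-1) ^ j) (nerve_face d j x)))"
    using Suc by (simp add: nerve_boundary_def frag_extend_def)
  then have "nerve_boundary d n (nerve_boundary d (Suc n) c) = (\<Sum>x\<in>Poly_Mapping.keys c. frag_cmul (poly_mapping.lookup c x)
        (nerve_boundary d (Suc m) (\<Sum>j\<le>Suc (Suc m). frag_cmul ((-1) ^ j) (nerve_face d j x))))"
    using Suc by (simp add: bd_sum bd_cmul)
  also have "\<dots> = 0"
  proof (rule sum.neutral, rule ballI)
    fix x assume "x \<in> Poly_Mapping.keys c"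
    then have "x \<in> nerve_gens X d (Suc n) l" using c by blast
    then have "set x \<subseteq> X" "length x = Suc (Suc (Suc m))" using Suc by (auto simp: nerve_gens_def)
    then show "frag_cmul (poly_mapping.lookup c x)
        (nerve_boundary d (Suc m) (\<Sum>j\<le>Suc (Suc m). frag_cmul ((-1) ^ j) (nerve_face d j x))) = 0"
      using bd_bd_gen[OF qm] by simp
  qed
  finally show ?thesis .
qed

lemma core_ex:
  assumes S: "finite S" and K: "zmod K" "K \<subseteq> {c. Poly_Mapping.keys c \<subseteq> S}"
    and B: "zmod B" "B \<subseteq> K"
  shows "\<exists>R. finite R \<and> R \<subseteq> K \<and> zind B R \<and> card R + Q.dim (emb ` B) = Q.dim (emb ` K)"
proof -
  let ?E = "(\<lambda>s. emb (frag_of s)) ` S"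
  have E: "finite ?E" "emb ` K \<subseteq> Q.span ?E" using S emb_span[OF K(2)] by auto
  have WV: "emb ` B \<subseteq> emb ` K" using B by auto
  obtain R' where R': "finite R'" "R' \<subseteq> emb ` K" "qind (emb ` B) R'" "card R' + Q.dim (emb ` B) = Q.dim (emb ` K)"
    using LA2[OF E WV] by blast
  define R where "R = K \<inter> emb -` R'"
  have eR: "emb ` R = R'" using R'(2) R_def by auto
  have fR: "finite R" using finite_imageD[of emb R] eR R'(1) emb_inj_on by blast
  have "card R = card R'" using eR card_image[OF emb_inj_on, of R] by simp
  moreover have "zind B R" using TR2[OF fR] R'(3) eR by simp
  ultimately show ?thesis using R'(4) fR R_def by (intro exI[of _ R]) auto
qed

lemma core_le:
  assumes S: "finite S" and K: "zmod K" "K \<subseteq> {c. Poly_Mapping.keys c \<subseteq> S}"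
    and B: "zmod B" "B \<subseteq> K" and R: "finite R" "R \<subseteq> K" "zind B R"
  shows "card R + Q.dim (emb ` B) \<le> Q.dim (emb ` K)"
proof -
  let ?E = "(\<lambda>s. emb (frag_of s)) ` S"
  have E: "finite ?E" "emb ` K \<subseteq> Q.span ?E" using S emb_span[OF K(2)] by auto
  have WV: "emb ` B \<subseteq> emb ` K" using B by auto
  have "card (emb ` R) + Q.dim (emb ` B) \<le> Q.dim (emb ` K)"
    using LA1[OF E WV] R TR1[OF B(1) R(1,3)] by blast
  then show ?thesis using card_image[OF emb_inj_on, of R] by simp
qed

lemma zind_diff:
  assumes "zind B R" "a \<in> R" "b \<in> R" "a \<noteq> b" "finite R"
  shows "a - b \<notin> B"
proof
  assume ab: "a - b \<in> B"
  define c :: "('a \<Rightarrow>\<^sub>0 int) \<Rightarrow> int" where "c r = (if r = a then 1 else if r = b then -1 else 0)" for r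
  have "(\<Sum>r\<in>R. frag_cmul (c r) r) = (\<Sum>r\<in>R. (if r = a then a else 0) + (if r = b then - b else 0))"
    by (rule sum.cong) (auto simp: c_def assms(4))
  also have "\<dots> = a - b" using assms(2,3,5) by (simp add: sum.distrib)
  finally have "(\<Sum>r\<in>R. frag_cmul (c r) r) \<in> B" using ab by simp
  then have "c a = 0" using assms(1,2) unfolding zind_def by blast
  then show False by (simp add: c_def)
qed

definition Cc :: "'a set \<Rightarrow> ('a \<Rightarrow> 'a \<Rightarrow> real) \<Rightarrow> nat \<Rightarrow> real \<Rightarrow> ('a list \<Rightarrow>\<^sub>0 int) set" where
  "Cc X d n l = {c. Poly_Mapping.keys c \<subseteq> nerve_gens X d n l}"
definition Zc :: "'a set \<Rightarrow> ('a \<Rightarrow> 'a \<Rightarrow> real) \<Rightarrow> nat \<Rightarrow> real \<Rightarrow> ('a list \<Rightarrow>\<^sub>0 int) set" where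
  "Zc X d n l = {c \<in> Cc X d n l. nerve_boundary d n c = 0}"
definition Bc :: "'a set \<Rightarrow> ('a \<Rightarrow> 'a \<Rightarrow> real) \<Rightarrow> nat \<Rightarrow> real \<Rightarrow> ('a list \<Rightarrow>\<^sub>0 int) set" where
  "Bc X d n l = nerve_boundary d (Suc n) ` Cc X d (Suc n) l"

definition cdim where "cdim X d n l = Q.dim (emb ` Cc X d n l)"
definition zdim where "zdim X d n l = Q.dim (emb ` Zc X d n l)"
definition bdim where "bdim X d n l = Q.dim (emb ` Bc X d n l)"

lemma finite_gens: "finite X \<Longrightarrow> finite (nerve_gens X d n l)"
  by (rule finite_subset[OF _ finite_lists_length_eq[of X "Suc n"]]) (auto simp: nerve_gens_def)

lemma zmod_C: "zmod (Cc X d n l)"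
  unfolding zmod_def Cc_def
proof (intro conjI ballI allI)
  fix a b :: "'a list \<Rightarrow>\<^sub>0 int"
  assume "a \<in> {c. Poly_Mapping.keys c \<subseteq> nerve_gens X d n l}" "b \<in> {c. Poly_Mapping.keys c \<subseteq> nerve_gens X d n l}"
  then show "a + b \<in> {c. Poly_Mapping.keys c \<subseteq> nerve_gens X d n l}"
    using keys_add[of a b] by auto
next
  fix a :: "'a list \<Rightarrow>\<^sub>0 int" and i
  assume "a \<in> {c. Poly_Mapping.keys c \<subseteq> nerve_gens X d n l}"
  then show "frag_cmul i a \<in> {c. Poly_Mapping.keys c \<subseteq> nerve_gens X d n l}"
    using keys_cmul[of i a] by auto
qed simp

lemma zmod_Z: "zmod (Zc X d n l)"
  using zmod_C[of X d n l] unfolding zmod_def Zc_def by (auto simp: bd_add bd_cmul bd_zero)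

lemma zmod_B: "zmod (Bc X d n l)"
  unfolding zmod_def Bc_def
proof (intro conjI ballI allI)
  show "0 \<in> nerve_boundary d (Suc n) ` Cc X d (Suc n) l"
    using zmod_C[of X d "Suc n" l] bd_zero[of d "Suc n"] unfolding zmod_def by (metis image_eqI)
  fix a b assume "a \<in> nerve_boundary d (Suc n) ` Cc X d (Suc n) l" "b \<in> nerve_boundary d (Suc n) ` Cc X d (Suc n) l"
  then obtain a' b' where "a' \<in> Cc X d (Suc n) l" "b' \<in> Cc X d (Suc n) l"
    "a = nerve_boundary d (Suc n) a'" "b = nerve_boundary d (Suc n) b'" by blast
  then show "a + b \<in> nerve_boundary d (Suc n) ` Cc X d (Suc n) l"
    using zmod_C[of X d "Suc n" l] unfolding zmod_def by (metis bd_add image_eqI)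
next
  fix a i assume "a \<in> nerve_boundary d (Suc n) ` Cc X d (Suc n) l"
  then obtain a' where "a' \<in> Cc X d (Suc n) l" "a = nerve_boundary d (Suc n) a'" by blast
  then show "frag_cmul i a \<in> nerve_boundary d (Suc n) ` Cc X d (Suc n) l"
    using zmod_C[of X d "Suc n" l] unfolding zmod_def by (metis bd_cmul image_eqI)
qed

lemma Z_sub: "Zc X d n l \<subseteq> Cc X d n l" by (auto simp: Zc_def)

lemma B_sub:
  assumes qm: "quasi_metric X d"
  shows "Bc X d n l \<subseteq> Zc X d n l"
proof
  fix y assume "y \<in> Bc X d n l"
  then obtain c where c: "c \<in> Cc X d (Suc n) l" "y = nerve_boundary d (Suc n) c" by (auto simp: Bc_def)
  then show "y \<in> Zc X d n l"
    using bd_closed[OF qm] bd_bd[OF qm] by (auto simp: Zc_def Cc_def)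
qed

lemma C_keys: "Cc X d n l \<subseteq> {c. Poly_Mapping.keys c \<subseteq> nerve_gens X d n l}"
  by (simp add: Cc_def)

lemma carrier_chains: "carrier (nerve_chains X d n l) = Cc X d n l"
  by (auto simp: nerve_chains_def Cc_def)

lemma rank_chains:
  assumes "finite X"
  shows "ab_rank (nerve_chains X d n l) = cdim X d n l"
  unfolding nerve_chains_def cdim_def Cc_def using rank_free[OF finite_gens[OF assms]] by simp

lemma rank_HM_eq:
  assumes fin: "finite X" and qm: "quasi_metric X d"
  shows "ab_rank (magnitude_homology X d n l) = zdim X d n l - bdim X d n l"
proof -
  have mh: "magnitude_homology X d n l
     = subgroup_generated (free_Abelian_group (nerve_gens X d n l)) (Zc X d n l) Mod (Bc X d n l)"
    unfolding magnitude_homology_def Zc_def Bc_def carrier_chains[symmetric]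
    by (simp add: nerve_chains_def)
  show ?thesis unfolding mh zdim_def bdim_def
    by (rule rank_quot[OF finite_gens[OF fin] zmod_Z _ zmod_B B_sub[OF qm]])
      (use Z_sub C_keys in blast)
qed

lemma dim_zero_set: "Q.dim (emb ` {0 :: 'b \<Rightarrow>\<^sub>0 int}) = 0"
  by (simp add: emb_zero dim_zero)

lemma zmod_zero: "zmod {0 :: 'b \<Rightarrow>\<^sub>0 int}" by (simp add: zmod_def)

lemma rank_nullity:
  assumes fin: "finite X" and qm: "quasi_metric X d"
  shows "cdim X d (Suc n) l = zdim X d (Suc n) l + bdim X d n l"
proof -
  let ?K = "Cc X d (Suc n) l" and ?Z = "Zc X d (Suc n) l" and ?B = "Bc X d n l"
  let ?bd = "nerve_boundary d (Suc n)"
  let ?O = "{0 :: 'a list \<Rightarrow>\<^sub>0 int}"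
  have S1: "finite (nerve_gens X d (Suc n) l)" and S0: "finite (nerve_gens X d n l)"
    using finite_gens[OF fin] by auto
  have ZK: "?Z \<subseteq> ?K" by (rule Z_sub)
  have BS: "?B \<subseteq> {c. Poly_Mapping.keys c \<subseteq> nerve_gens X d n l}"
    using B_sub[OF qm] Z_sub C_keys by blast
  have OB: "?O \<subseteq> ?B" using zmod_B[of X d n l] by (auto simp: zmod_def)
  have Bdef: "?B = ?bd ` ?K" by (simp add: Bc_def)
  have diffK: "a - b \<in> ?K" if "a \<in> ?K" "b \<in> ?K" for a b
  proof -
    have "a + frag_cmul (-1) b \<in> ?K" using zmod_C[of X d "Suc n" l] that unfolding zmod_def by blast
    then show ?thesis by simp
  qed
  have bd_diff: "?bd (a - b) = ?bd a - ?bd b" for a b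
    using bd_add[of d "Suc n" a "frag_cmul (-1) b"] bd_cmul[of d "Suc n" "-1" b] by simp
  have lin: "?bd (\<Sum>r\<in>R. frag_cmul (c r) r) = (\<Sum>r\<in>R. frag_cmul (c r) (?bd r))" for R c
    by (simp add: bd_sum bd_cmul)
  obtain R where R: "finite R" "R \<subseteq> ?K" "zind ?Z R" "card R + zdim X d (Suc n) l = cdim X d (Suc n) l"
    using core_ex[OF S1 zmod_C C_keys zmod_Z ZK] unfolding zdim_def cdim_def by blast
  have inj: "inj_on ?bd R"
  proof (rule inj_onI, rule ccontr)
    fix a b assume ab: "a \<in> R" "b \<in> R" "?bd a = ?bd b" "a \<noteq> b"
    have "a - b \<in> ?Z" using diffK[of a b] ab R(2) bd_diff[of a b] by (auto simp: Zc_def)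
    then show False using zind_diff[OF R(3) ab(1,2,4) R(1)] by blast
  qed
  have "zind ?O (?bd ` R)"
    unfolding zind_def
  proof (intro allI impI)
    fix c' :: "('a list \<Rightarrow>\<^sub>0 int) \<Rightarrow> int"
    assume "(\<Sum>y\<in>?bd ` R. frag_cmul (c' y) y) \<in> ?O"
    then have "(\<Sum>r\<in>R. frag_cmul (c' (?bd r)) (?bd r)) = 0"
      using sum.reindex[OF inj, of "\<lambda>y. frag_cmul (c' y) y"] by simp
    then have "?bd (\<Sum>r\<in>R. frag_cmul (c' (?bd r)) r) = 0" using lin by simp
    moreover have "(\<Sum>r\<in>R. frag_cmul (c' (?bd r)) r) \<in> ?K"
      using zmod_C[of X d "Suc n" l] R(2) by (intro zmod_sum) (auto simp: zmod_def)
    ultimately have "(\<Sum>r\<in>R. frag_cmul ((\<lambda>r. c' (?bd r)) r) r) \<in> ?Z" by (simp add: Zc_def)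
    then have "\<forall>r\<in>R. c' (?bd r) = 0" using spec[OF R(3)[unfolded zind_def], of "\<lambda>r. c' (?bd r)"] by simp
    then show "\<forall>y\<in>?bd ` R. c' y = 0" by blast
  qed
  moreover have "?bd ` R \<subseteq> ?B" using R(2) Bdef by blast
  ultimately have "card (?bd ` R) + Q.dim (emb ` ?O) \<le> Q.dim (emb ` ?B)"
    using core_le[OF S0 zmod_B BS zmod_zero OB] R(1) by blast
  then have le1: "card R \<le> bdim X d n l"
    using card_image[OF inj] by (simp add: dim_zero_set bdim_def)
  obtain R' where R': "finite R'" "R' \<subseteq> ?B" "zind ?O R'" "card R' + Q.dim (emb ` ?O) = bdim X d n l"
    using core_ex[OF S0 zmod_B BS zmod_zero OB] unfolding bdim_def by blast
  define pre where "pre y = (SOME c. c \<in> ?K \<and> ?bd c = y)" for y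
  have pre: "pre y \<in> ?K \<and> ?bd (pre y) = y" if "y \<in> R'" for y
  proof -
    have "y \<in> ?bd ` ?K" using R'(2) that Bdef by auto
    then have "\<exists>c. c \<in> ?K \<and> ?bd c = y" by (auto simp: image_iff)
    then show ?thesis unfolding pre_def by (rule someI_ex)
  qed
  have injp: "inj_on pre R'" using pre by (metis inj_onI)
  have "zind ?Z (pre ` R')"
    unfolding zind_def
  proof (intro allI impI)
    fix c :: "('a list \<Rightarrow>\<^sub>0 int) \<Rightarrow> int"
    assume "(\<Sum>r\<in>pre ` R'. frag_cmul (c r) r) \<in> ?Z"
    then have "?bd (\<Sum>r\<in>pre ` R'. frag_cmul (c r) r) = 0" by (simp add: Zc_def)
    then have "(\<Sum>r\<in>pre ` R'. frag_cmul (c r) (?bd r)) = 0" using lin by simp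
    then have "(\<Sum>y\<in>R'. frag_cmul (c (pre y)) (?bd (pre y))) = 0"
      using sum.reindex[OF injp, of "\<lambda>r. frag_cmul (c r) (?bd r)"] by simp
    moreover have "(\<Sum>y\<in>R'. frag_cmul (c (pre y)) (?bd (pre y))) = (\<Sum>y\<in>R'. frag_cmul ((\<lambda>y. c (pre y)) y) y)"
      using pre by (intro sum.cong) auto
    ultimately have "(\<Sum>y\<in>R'. frag_cmul ((\<lambda>y. c (pre y)) y) y) \<in> ?O" by simp
    then have "\<forall>y\<in>R'. c (pre y) = 0" using spec[OF R'(3)[unfolded zind_def], of "\<lambda>y. c (pre y)"] by simp
    then show "\<forall>r\<in>pre ` R'. c r = 0" by blast
  qed
  moreover have "pre ` R' \<subseteq> ?K" using pre by blast
  ultimately have "card (pre ` R') + zdim X d (Suc n) l \<le> cdim X d (Suc n) l"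
    using core_le[OF S1 zmod_C C_keys zmod_Z ZK] R'(1) unfolding zdim_def cdim_def by blast
  then have le2: "bdim X d n l + zdim X d (Suc n) l \<le> cdim X d (Suc n) l"
    using card_image[OF injp] R'(4) by (simp add: dim_zero_set emb_zero dim_zero)
  show ?thesis using le1 le2 R(4) by linarith
qed

lemma cdim_zdim0: "cdim X d 0 l = zdim X d 0 l"
proof -
  have "Zc X d 0 l = Cc X d 0 l" by (auto simp: Zc_def nerve_boundary_def)
  then show ?thesis by (simp add: cdim_def zdim_def)
qed

lemma zdim_le: assumes "finite X" shows "zdim X d n l \<le> cdim X d n l"
  unfolding zdim_def cdim_def using dim_mono_core[OF finite_gens[OF assms] C_keys Z_sub] .

lemma bdim_le: assumes "finite X" "quasi_metric X d" shows "bdim X d n l \<le> zdim X d n l"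
  unfolding zdim_def bdim_def
  using dim_mono_core[OF finite_gens[OF assms(1)] _ B_sub[OF assms(2)]] Z_sub C_keys by blast

lemma cdim_empty: assumes "nerve_gens X d n l = {}" shows "cdim X d n l = 0"
proof -
  have "Cc X d n l = {0}" using assms by (auto simp: Cc_def)
  then show ?thesis by (simp add: cdim_def emb_zero dim_zero)
qed

lemma delta_exists:
  assumes fin: "finite X" and qm: "quasi_metric X d"
  shows "\<exists>\<delta>>0. \<forall>x\<in>X. \<forall>y\<in>X. x \<noteq> y \<longrightarrow> \<delta> \<le> d x y"
proof -
  define P where "P = (\<lambda>p. d (fst p) (snd p)) ` {p \<in> X \<times> X. fst p \<noteq> snd p}"
  have "finite (X \<times> X)" using fin by simp
  then have "finite {p \<in> X \<times> X. fst p \<noteq> snd p}" by (rule finite_subset[rotated]) blast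
  then have fP: "finite P" unfolding P_def by (rule finite_imageI)
  have mem: "d x y \<in> P" if "x \<in> X" "y \<in> X" "x \<noteq> y" for x y
    unfolding P_def using that by (intro image_eqI[of _ _ "(x, y)"]) auto
  have pos: "0 < p" if pP: "p \<in> P" for p
  proof -
    obtain q where "q \<in> X \<times> X" "fst q \<noteq> snd q" "p = d (fst q) (snd q)" using pP unfolding P_def by blast
    then show ?thesis using qm_facts(4)[OF qm, of "fst q" "snd q"] by auto
  qed
  show ?thesis
  proof (cases "P = {}")
    case True
    then have "\<forall>x\<in>X. \<forall>y\<in>X. x \<noteq> y \<longrightarrow> 1 \<le> d x y" using mem by blast
    then show ?thesis by (intro exI[of _ 1]) simp
  next
    case False
    have "0 < Min P" using Min_in[OF fP False] pos by blast
    moreover have "Min P \<le> d x y" if "x \<in> X" "y \<in> X" "x \<noteq> y" for x y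
      using Min_le[OF fP mem[OF that]] .
    ultimately show ?thesis by blast
  qed
qed

lemma gens_bound:
  assumes \<delta>: "\<forall>x\<in>X. \<forall>y\<in>X. x \<noteq> y \<longrightarrow> \<delta> \<le> d x y" and xs: "xs \<in> nerve_gens X d n l"
  shows "real n * \<delta> \<le> l"
proof -
  have len: "length xs = Suc n" and X: "set xs \<subseteq> X" and di: "\<forall>i<n. xs ! i \<noteq> xs ! Suc i"
    and tl: "tuple_length d xs = l" using xs by (auto simp: nerve_gens_def)
  have "l = (\<Sum>i<n. d (xs ! i) (xs ! Suc i))" using tl len by (simp add: tuple_length_def)
  moreover have "real (card {..<n}) * \<delta> \<le> (\<Sum>i<n. d (xs ! i) (xs ! Suc i))"
  proof (rule sum_bounded_below)
    fix i assume "i \<in> {..<n}"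
    then have "xs ! i \<in> X" "xs ! Suc i \<in> X" "xs ! i \<noteq> xs ! Suc i" using X len di by (auto simp: subset_iff)
    then show "\<delta> \<le> d (xs ! i) (xs ! Suc i)" using \<delta> by blast
  qed
  ultimately show ?thesis by simp
qed

lemma tele:
  fixes c z b :: "nat \<Rightarrow> rat"
  assumes "c 0 = z 0" "\<And>n. c (Suc n) = z (Suc n) + b n"
  shows "(\<Sum>n<N. (-1) ^ n * c n) = (\<Sum>n<N. (-1) ^ n * (z n - b n)) + (case N of 0 \<Rightarrow> 0 | Suc m \<Rightarrow> (-1) ^ m * b m)"
proof (induction N)
  case 0
  then show ?case by simp
next
  case (Suc N)
  then show ?case
  proof (cases N)
    case 0
    then show ?thesis using assms by simp
  next
    case (Suc m)
    show ?thesis using Suc.IH assms(2)[of m] unfolding Suc by (simp add: algebra_simps)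
  qed
qed

lemma wellord_of_finite:
  fixes T :: "real set"
  assumes fin: "\<And>M. finite {l \<in> T. l \<le> M}" and A: "A \<subseteq> T" "A \<noteq> {}"
  shows "\<exists>m\<in>A. \<forall>s\<in>A. m \<le> s"
proof -
  obtain s where s: "s \<in> A" using A by blast
  define A' where "A' = {a \<in> A. a \<le> s}"
  have sub: "A' \<subseteq> {l \<in> T. l \<le> s}" using A(1) unfolding A'_def by blast
  have f: "finite A'" using finite_subset[OF sub fin[of s]] .
  have ne: "A' \<noteq> {}" using s unfolding A'_def by auto
  have mA: "Min A' \<in> A'" using Min_in[OF f ne] .
  show ?thesis
  proof (intro bexI ballI)
    show "Min A' \<in> A" using mA unfolding A'_def by simp
    fix a assume a: "a \<in> A"
    show "Min A' \<le> a"
    proof (cases "a \<le> s")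
      case True
      then have "a \<in> A'" using a unfolding A'_def by simp
      then show ?thesis using Min_le[OF f] by blast
    next
      case False
      have "Min A' \<le> s" using mA unfolding A'_def by simp
      then show ?thesis using False by linarith
    qed
  qed
qed

lemma nK_lem:
  fixes \<delta> M :: real
  assumes "\<delta> > 0" "real n * \<delta> \<le> M"
  shows "n \<le> nat \<lceil>M / \<delta>\<rceil>"
proof -
  have "real n \<le> M / \<delta>" using assms by (simp add: pos_le_divide_eq)
  also have "\<dots> \<le> of_int \<lceil>M / \<delta>\<rceil>" by (rule le_of_int_ceiling)
  finally have "int n \<le> \<lceil>M / \<delta>\<rceil>" by linarith
  then show ?thesis by (simp add: le_nat_iff)
qed

lemma Kn_lem:
  fixes \<delta> M :: real
  assumes "\<delta> > 0" "nat \<lceil>M / \<delta>\<rceil> \<le> n"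
  shows "M \<le> real n * \<delta>"
proof -
  have "M / \<delta> \<le> real (nat \<lceil>M / \<delta>\<rceil>)" by (rule real_nat_ceiling_ge)
  also have "\<dots> \<le> real n" using assms(2) by simp
  finally show ?thesis using assms(1) by (simp add: pos_divide_le_eq)
qed

lemma empty_lem:
  assumes "\<forall>x\<in>X. \<forall>y\<in>X. x \<noteq> y \<longrightarrow> \<delta> \<le> d x y" "l < real n * \<delta>"
  shows "nerve_gens X d n l = {}"
proof (rule ccontr)
  assume "nerve_gens X d n l \<noteq> {}"
  then obtain xs where "xs \<in> nerve_gens X d n l" by blast
  from gens_bound[OF assms(1) this] assms(2) show False by linarith
qed

theorem theorem5p9:
  fixes X :: "'a set" and d :: "'a \<Rightarrow> 'a \<Rightarrow> real"
  assumes "finite X" and "quasi_metric X d"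
  shows "is_hahn (nerve_euler_char X d) \<and> (\<forall>n. is_hahn (rank_HM X d n)) \<and>
         hahn_sums (\<lambda>n l. (-1) ^ n * rank_HM X d n l) (nerve_euler_char X d)"
proof -
  note fin = assms(1) and qm = assms(2)
  obtain \<delta> where \<delta>: "\<delta> > 0" "\<forall>x\<in>X. \<forall>y\<in>X. x \<noteq> y \<longrightarrow> \<delta> \<le> d x y"
    using delta_exists[OF fin qm] by blast
  have empty: "nerve_gens X d n l = {}" if "l < real n * \<delta>" for n l
    using empty_lem[OF \<delta>(2) that] .
  have nK: "n \<le> nat \<lceil>M / \<delta>\<rceil>" if "real n * \<delta> \<le> M" for n M
    using nK_lem[OF \<delta>(1) that] .
  have Kn: "M \<le> real n * \<delta>" if "nat \<lceil>M / \<delta>\<rceil> \<le> n" for n M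
    using Kn_lem[OF \<delta>(1) that] .
  define T where "T = {l. \<exists>n. nerve_gens X d n l \<noteq> {}}"
  have finT: "finite {l \<in> T. l \<le> M}" for M
  proof -
    let ?K = "nat \<lceil>M / \<delta>\<rceil>"
    have "{l \<in> T. l \<le> M} \<subseteq> tuple_length d ` {xs. set xs \<subseteq> X \<and> length xs \<le> Suc ?K}"
    proof
      fix l assume "l \<in> {l \<in> T. l \<le> M}"
      then obtain n xs where xs: "xs \<in> nerve_gens X d n l" and lM: "l \<le> M" unfolding T_def by blast
      have "real n * \<delta> \<le> M" using gens_bound[OF \<delta>(2) xs] lM by linarith
      then have "n \<le> ?K" using nK by blast
      moreover have "length xs = Suc n" "set xs \<subseteq> X" "tuple_length d xs = l"
        using xs by (auto simp: nerve_gens_def)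
      ultimately have "xs \<in> {xs. set xs \<subseteq> X \<and> length xs \<le> Suc ?K}" "l = tuple_length d xs" by auto
      then show "l \<in> tuple_length d ` {xs. set xs \<subseteq> X \<and> length xs \<le> Suc ?K}" by (rule image_eqI[rotated])
    qed
    then show ?thesis
      by (rule finite_subset[OF _ finite_imageI[OF finite_lists_length_le[OF fin]]])
  qed
  have cT: "l \<in> T" if cn: "cdim X d n l \<noteq> 0" for n l
  proof (rule ccontr)
    assume "l \<notin> T"
    then have "nerve_gens X d n l = {}" unfolding T_def by blast
    then have "cdim X d n l = 0" by (rule cdim_empty)
    then show False using cn by simp
  qed
  have chi: "nerve_euler_char X d l = (\<Sum>n\<in>{n. cdim X d n l \<noteq> 0}. (-1) ^ n * of_nat (cdim X d n l))" for l
    unfolding nerve_euler_char_def rank_chains[OF fin] ..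
  have hm: "rank_HM X d n l = of_nat (zdim X d n l) - of_nat (bdim X d n l)" for n l
    unfolding rank_HM_def rank_HM_eq[OF fin qm] using bdim_le[OF fin qm] by (simp add: of_nat_diff)
  have H1: "is_hahn (nerve_euler_char X d)"
    unfolding is_hahn_def
  proof (intro allI impI)
    fix A assume A: "A \<subseteq> {l. nerve_euler_char X d l \<noteq> 0}" "A \<noteq> {}"
    have "A \<subseteq> T"
    proof
      fix l assume "l \<in> A"
      then have "nerve_euler_char X d l \<noteq> 0" using A by blast
      then have "{n. cdim X d n l \<noteq> 0} \<noteq> {}" unfolding chi by (metis sum.empty)
      then show "l \<in> T" using cT by blast
    qed
    then show "\<exists>m\<in>A. \<forall>s\<in>A. m \<le> s" using wellord_of_finite[OF finT] A(2) by blast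
  qed
  have H2: "is_hahn (rank_HM X d n)" for n
    unfolding is_hahn_def
  proof (intro allI impI)
    fix A assume A: "A \<subseteq> {l. rank_HM X d n l \<noteq> 0}" "A \<noteq> {}"
    have "A \<subseteq> T"
    proof
      fix l assume "l \<in> A"
      then have "rank_HM X d n l \<noteq> 0" using A by blast
      then have "zdim X d n l \<noteq> 0" unfolding hm using bdim_le[OF fin qm, of n l] by auto
      then have "cdim X d n l \<noteq> 0" using zdim_le[OF fin, of d n l] by linarith
      then show "l \<in> T" using cT by blast
    qed
    then show "\<exists>m\<in>A. \<forall>s\<in>A. m \<le> s" using wellord_of_finite[OF finT] A(2) by blast
  qed
  have H3: "hahn_sums (\<lambda>n l. (-1) ^ n * rank_HM X d n l) (nerve_euler_char X d)"
    unfolding hahn_sums_def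
  proof (intro allI)
    fix M :: real
    define K where "K = nat \<lceil>M / \<delta>\<rceil>"
    have c0: "cdim X d n l = 0" if "K \<le> n" "l < M" for n l
    proof -
      have "M \<le> real n * \<delta>" using Kn that(1) unfolding K_def by blast
      then show ?thesis using empty[of l n] that(2) cdim_empty by simp
    qed
    show "\<exists>N0. \<forall>N\<ge>N0. \<forall>l<M. (\<Sum>n<N. (-1) ^ n * rank_HM X d n l) = nerve_euler_char X d l"
    proof (intro exI[of _ "Suc K"] allI impI)
      fix N l assume N: "Suc K \<le> N" and l: "l < M"
      define c where "c n = (of_nat (cdim X d n l) :: rat)" for n
      define z where "z n = (of_nat (zdim X d n l) :: rat)" for n
      define b where "b n = (of_nat (bdim X d n l) :: rat)" for n
      have "(\<Sum>n<N. (-1) ^ n * rank_HM X d n l) = (\<Sum>n<N. (-1) ^ n * (z n - b n))"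
        unfolding hm z_def b_def ..
      also have "\<dots> = (\<Sum>n<N. (-1) ^ n * c n) - (case N of 0 \<Rightarrow> 0 | Suc m \<Rightarrow> (-1) ^ m * b m)"
      proof -
        have "c 0 = z 0" unfolding c_def z_def using cdim_zdim0 by simp
        moreover have "c (Suc n) = z (Suc n) + b n" for n
          unfolding c_def z_def b_def using rank_nullity[OF fin qm] by simp
        ultimately show ?thesis using tele[of c z b N] by simp
      qed
      also have "(case N of 0 \<Rightarrow> 0 | Suc m \<Rightarrow> (-1) ^ m * b m) = 0"
      proof (cases N)
        case 0 then show ?thesis by simp
      next
        case (Suc m)
        have "bdim X d m l \<le> zdim X d (Suc m) l + bdim X d m l" by simp
        also have "\<dots> = cdim X d (Suc m) l" using rank_nullity[OF fin qm] by simp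
        also have "\<dots> = 0" using c0[of "Suc m" l] N l Suc by simp
        finally show ?thesis using Suc by (simp add: b_def)
      qed
      also have "(\<Sum>n<N. (-1) ^ n * c n) - 0 = nerve_euler_char X d l"
      proof -
        have "nerve_euler_char X d l = (\<Sum>n\<in>{n. cdim X d n l \<noteq> 0}. (-1) ^ n * c n)"
          unfolding chi c_def ..
        also have "\<dots> = (\<Sum>n<N. (-1) ^ n * c n)"
        proof (rule sum.mono_neutral_left)
          show "finite {..<N}" by simp
          show "{n. cdim X d n l \<noteq> 0} \<subseteq> {..<N}"
          proof
            fix n assume "n \<in> {n. cdim X d n l \<noteq> 0}"
            then have "\<not> K \<le> n" using c0[of n l] l by auto
            then show "n \<in> {..<N}" using N by simp
          qed
          show "\<forall>i\<in>{..<N} - {n. cdim X d n l \<noteq> 0}. (-1) ^ i * c i = 0"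
            by (simp add: c_def)
        qed
        finally show ?thesis by simp
      qed
      finally show "(\<Sum>n<N. (-1) ^ n * rank_HM X d n l) = nerve_euler_char X d l" .
    qed
  qed
  show ?thesis using H1 H2 H3 by blast
qed

end
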